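(* Let $N=2^L$ with $L$ a positive integer, let $D_1,\ldots,D_N,R$ be positive integers, let $\mathcal{A}\in\mathbb{R}^{D_1\times\cdots\times D_N}$ and $\epsilon>0$. Suppose that for all canonical partitions $(\mathcal{K},\mathcal{K}^c)\in\mathcal{C}_N$ it holds that $\mathrm{QE}(\mathcal{A};\mathcal{K})\le\frac{\epsilon^2}{(2N-3)\|\mathcal{A}\|^2}\ln(R)$. Then there exists an assignment of the tensors of the locally connected tensor network of width $R$ such that the tensor $\mathcal{W}_{\mathrm{TN}}\in\mathbb{R}^{D_1\times\cdots\times D_N}$ it generates satisfies $\|\mathcal{W}_{\mathrm{TN}}-\mathcal{A}\|\le\epsilon$.
   Context: $[N]=\{1,\ldots,N\}$; norms are Frobenius (Euclidean) norms. For a tensor $\mathcal{A}\in\mathbb{R}^{D_1\times\cdots\times D_N}$ and $\mathcal{K}\subseteq[N]$, $\mathcal{K}^c=[N]\setminus\mathcal{K}$, $[\![\mathcal{A};\mathcal{K}]\!]$ is the matrix arrangement of $\mathcal{A}$ with rows indexed by the axes in $\mathcal{K}$ and columns by the axes in $\mathcal{K}^c$, and $D_{\mathcal{K}}:=\min\{\prod_{n\in\mathcal{K}}D_n,\prod_{n\in\mathcal{K}^c}D_n\}$. The quantum entanglement is $\mathrm{QE}(\mathcal{A};\mathcal{K}):=-\sum_{d=1}^{D_{\mathcal{K}}}\rho_d\ln\rho_d$ where $\rho_d=\sigma_d^2/\sum_{d'}\sigma_{d'}^2$ and $\sigma_1\ge\cdots\ge\sigma_{D_{\mathcal{K}}}$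 are the singular values of $[\![\mathcal{A};\mathcal{K}]\!]$; by convention $\mathrm{QE}(0;\mathcal{K})=0$. The canonical partitions $\mathcal{C}_N$ are the pairs $(\mathcal{K},\mathcal{K}^c)$ with $\mathcal{K}=\{2^{L-l}(n-1)+1,\ldots,2^{L-l}n\}$ for $l\in\{0,\ldots,L\}$, $n\in[2^l]$. The locally connected tensor network of width $R$ is a tensor network whose graph is a perfect binary tree with $N$ leaves, the open edge at the $n$-th leaf having dimension $D_n$ and all inner edges having dimension $R$; the tensors it generates are exactly those of the form: choose vectors $\phi^{(0,n)}_r\in\mathbb{R}^{D_n}$ ($n\in[N]$, $r\in[R]$); for $l=1,\ldots,L-1$, $n\in[2^{L-l}]$, $r\in[R]$ set $\phi^{(l,n)}_r=\sum_{i,j\in[R]}a^{(l,n)}_{r,i,j}\,\phi^{(l-1,2n-1)}_i\otimes\phi^{(l-1,2n)}_j$ with arbitrary real coefficients; and $\mathcal{W}_{\mathrm{TN}}=\sum_{i,j\in[R]}a_{i,j}\,\phi^{(L-1,1)}_i\otimes\phi^{(L-1,2)}_j$. *)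

theory Defs
  imports Complex_Main "HOL-Library.FuncSet"
begin

text \<open>Tensors in R^{D_1 x ... x D_N} are functions on index maps (nat => nat); only
  the entries at index maps in tidx D N (axes 1..N, index of axis n in {0..<D n}) matter.\<close>

definition tidx :: "(nat \<Rightarrow> nat) \<Rightarrow> nat set \<Rightarrow> (nat \<Rightarrow> nat) set" where
  "tidx D K = PiE K (\<lambda>n. {..<D n})"

definition tnorm :: "(nat \<Rightarrow> nat) \<Rightarrow> nat \<Rightarrow> ((nat \<Rightarrow> nat) \<Rightarrow> real) \<Rightarrow> real" where
  "tnorm D N A = sqrt (\<Sum>i\<in>tidx D {1..N}. (A i)^2)"

definition matricize :: "((nat \<Rightarrow> nat) \<Rightarrow> real) \<Rightarrow> nat set \<Rightarrow> (nat \<Rightarrow> nat) \<Rightarrow> (nat \<Rightarrow> nat) \<Rightarrow> real" where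
  "matricize A K r c = A (\<lambda>n. if n \<in> K then r n else c n)"

text \<open>Singular value decomposition of a matrix with finite row/column index sets;
  singular values sigma 0 >= sigma 1 >= ... (0-based), m = min(#rows, #cols).\<close>
definition is_svd :: "'r set \<Rightarrow> 'c set \<Rightarrow> ('r \<Rightarrow> 'c \<Rightarrow> real) \<Rightarrow> (nat \<Rightarrow> real)
    \<Rightarrow> (nat \<Rightarrow> 'r \<Rightarrow> real) \<Rightarrow> (nat \<Rightarrow> 'c \<Rightarrow> real) \<Rightarrow> bool" where
  "is_svd Rs Cs M \<sigma> u v \<longleftrightarrow>
     (let m = min (card Rs) (card Cs) in
       (\<forall>d<m. 0 \<le> \<sigma> d) \<and> (\<forall>d. Suc d < m \<longrightarrow> \<sigma> (Suc d) \<le> \<sigma> d) \<and>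
       (\<forall>d<m. \<forall>d'<m. (\<Sum>r\<in>Rs. u d r * u d' r) = (if d = d' then 1 else 0)) \<and>
       (\<forall>d<m. \<forall>d'<m. (\<Sum>c\<in>Cs. v d c * v d' c) = (if d = d' then 1 else 0)) \<and>
       (\<forall>r\<in>Rs. \<forall>c\<in>Cs. M r c = (\<Sum>d<m. \<sigma> d * u d r * v d c)))"

definition sing_vals :: "'r set \<Rightarrow> 'c set \<Rightarrow> ('r \<Rightarrow> 'c \<Rightarrow> real) \<Rightarrow> nat \<Rightarrow> real" where
  "sing_vals Rs Cs M = (SOME \<sigma>. \<exists>u v. is_svd Rs Cs M \<sigma> u v)"

definition QE :: "(nat \<Rightarrow> nat) \<Rightarrow> nat \<Rightarrow> ((nat \<Rightarrow> nat) \<Rightarrow> real) \<Rightarrow> nat set \<Rightarrow> real" where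
  "QE D N A K =
     (let Rs = tidx D K; Cs = tidx D ({1..N} - K);
          \<sigma> = sing_vals Rs Cs (matricize A K);
          m = min (card Rs) (card Cs);
          S = (\<Sum>d<m. (\<sigma> d)^2)
      in if S = 0 then 0 else - (\<Sum>d<m. ((\<sigma> d)^2 / S) * ln ((\<sigma> d)^2 / S)))"

text \<open>Canonical partitions for N = 2^L (the set K; K^c is its complement in {1..N}).\<close>
definition canonical_parts :: "nat \<Rightarrow> nat set set" where
  "canonical_parts L = {{2^(L-l)*(n-1)+1 .. 2^(L-l)*n} | l n. l \<le> L \<and> n \<in> {1..2^l}}"

text \<open>Locally connected tensor network of width R (inner indices 0..<R).
  v n r = phi^(0,n)_r (a vector in R^{D_n}, entries v n r k, k < D n);
  a l n r i j = coefficients a^(l,n)_{r,i,j}; c i j = a_{i,j}.\<close>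
fun tn_phi :: "nat \<Rightarrow> (nat \<Rightarrow> nat \<Rightarrow> nat \<Rightarrow> real) \<Rightarrow> (nat \<Rightarrow> nat \<Rightarrow> nat \<Rightarrow> nat \<Rightarrow> nat \<Rightarrow> real)
    \<Rightarrow> nat \<Rightarrow> nat \<Rightarrow> nat \<Rightarrow> (nat \<Rightarrow> nat) \<Rightarrow> real" where
  "tn_phi R v a 0 n r idx = v n r (idx n)"
| "tn_phi R v a (Suc l) n r idx =
     (\<Sum>i<R. \<Sum>j<R. a (Suc l) n r i j * tn_phi R v a l (2*n-1) i idx * tn_phi R v a l (2*n) j idx)"

definition tn_W :: "nat \<Rightarrow> (nat \<Rightarrow> nat \<Rightarrow> nat \<Rightarrow> real) \<Rightarrow> (nat \<Rightarrow> nat \<Rightarrow> nat \<Rightarrow> nat \<Rightarrow> nat \<Rightarrow> real)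
    \<Rightarrow> (nat \<Rightarrow> nat \<Rightarrow> real) \<Rightarrow> nat \<Rightarrow> (nat \<Rightarrow> nat) \<Rightarrow> real" where
  "tn_W R v a c L idx =
     (\<Sum>i<R. \<Sum>j<R. c i j * tn_phi R v a (L-1) 1 i idx * tn_phi R v a (L-1) 2 j idx)"

end

theory Submission
  imports Defs "HOL-Analysis.Analysis"
begin


definition ip :: "'a set \<Rightarrow> ('a \<Rightarrow> real) \<Rightarrow> ('a \<Rightarrow> real) \<Rightarrow> real" where
  "ip S x y = (\<Sum>s\<in>S. x s * y s)"

definition orthn :: "'a set \<Rightarrow> (nat \<Rightarrow> 'a \<Rightarrow> real) \<Rightarrow> nat \<Rightarrow> bool" where
  "orthn S w k \<longleftrightarrow> (\<forall>d<k. \<forall>d'<k. ip S (w d) (w d') = (if d = d' then 1 else 0))"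

definition prj :: "'a set \<Rightarrow> (nat \<Rightarrow> 'a \<Rightarrow> real) \<Rightarrow> nat \<Rightarrow> ('a \<Rightarrow> real) \<Rightarrow> 'a \<Rightarrow> real" where
  "prj S w k x = (\<lambda>s. \<Sum>d<k. ip S x (w d) * w d s)"

lemma ip_sym: "ip S x y = ip S y x"
  unfolding ip_def by (simp add: mult.commute)

lemma ip_add: "ip S (\<lambda>s. x s + y s) z = ip S x z + ip S y z"
  unfolding ip_def by (simp add: distrib_right sum.distrib)

lemma ip_diff: "ip S (\<lambda>s. x s - y s) z = ip S x z - ip S y z"
  unfolding ip_def by (simp add: left_diff_distrib sum_subtractf)

lemma ip_scale: "ip S (\<lambda>s. c * x s) z = c * ip S x z"
  unfolding ip_def by (simp add: sum_distrib_left mult.assoc)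

lemma ip_scale2: "ip S (\<lambda>s. a * x s) (\<lambda>s. b * y s) = a * b * ip S x y"
  unfolding ip_def by (simp add: sum_distrib_left mult.assoc mult.left_commute)

lemma ip_sum: "ip S (\<lambda>s. \<Sum>d\<in>F. f d s) z = (\<Sum>d\<in>F. ip S (f d) z)"
  unfolding ip_def sum_distrib_right by (rule sum.swap)

lemma ip_cong: "(\<And>s. s \<in> S \<Longrightarrow> x s = x' s) \<Longrightarrow> (\<And>s. s \<in> S \<Longrightarrow> y s = y' s) \<Longrightarrow> ip S x y = ip S x' y'"
  unfolding ip_def by auto

lemma ip_nonneg: "ip S x x \<ge> 0"
  unfolding ip_def by (auto intro: sum_nonneg)

lemma ip_prj_left: "ip S (prj S w k x) y = (\<Sum>d<k. ip S x (w d) * ip S (w d) y)"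
  unfolding prj_def by (simp add: ip_sum ip_scale)

lemma ip_prj_w:
  assumes "orthn S w k" "d < k"
  shows "ip S (prj S w k x) (w d) = ip S x (w d)"
proof -
  have "ip S (prj S w k x) (w d) = (\<Sum>d'<k. ip S x (w d') * (if d' = d then 1 else 0))"
    unfolding ip_prj_left using assms unfolding orthn_def by (intro sum.cong) auto
  also have "\<dots> = ip S x (w d)" using assms(2) by (simp add: if_distrib cong: if_cong)
  finally show ?thesis .
qed

lemma ip_prj_prj:
  assumes "orthn S w k"
  shows "ip S (prj S w k x) (prj S w k y) = (\<Sum>d<k. ip S x (w d) * ip S y (w d))"
proof -
  have "ip S (prj S w k x) (prj S w k y) = ip S (prj S w k y) (prj S w k x)" by (rule ip_sym)
  also have "\<dots> = (\<Sum>d<k. ip S y (w d) * ip S (w d) (prj S w k x))" by (rule ip_prj_left)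
  also have "\<dots> = (\<Sum>d<k. ip S y (w d) * ip S x (w d))"
    using ip_prj_w[OF assms] by (intro sum.cong) (auto simp: ip_sym)
  finally show ?thesis by (simp add: mult.commute)
qed

lemma ip_prj_x:
  shows "ip S (prj S w k x) x = (\<Sum>d<k. ip S x (w d) * ip S x (w d))"
  unfolding ip_prj_left by (simp add: ip_sym)

lemma ip_diff_r: "ip S z (\<lambda>s. x s - y s) = ip S z x - ip S z y"
  unfolding ip_def by (simp add: right_diff_distrib sum_subtractf)

lemma ip_add_r: "ip S z (\<lambda>s. x s + y s) = ip S z x + ip S z y"
  unfolding ip_def by (simp add: distrib_left sum.distrib)

lemma res_nsq:
  assumes "orthn S w k"
  shows "ip S (\<lambda>s. x s - prj S w k x s) (\<lambda>s. x s - prj S w k x s) = ip S x x - (\<Sum>d<k. (ip S x (w d))^2)"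
proof -
  have "ip S (\<lambda>s. x s - prj S w k x s) (\<lambda>s. x s - prj S w k x s)
      = ip S x x - ip S (prj S w k x) x - ip S x (prj S w k x) + ip S (prj S w k x) (prj S w k x)"
    by (simp only: ip_diff ip_diff_r)
  also have "\<dots> = ip S x x - (\<Sum>d<k. (ip S x (w d))^2)"
    using ip_prj_prj[OF assms, of x x] ip_prj_x[of S w k x] ip_sym[of S x "prj S w k x"]
    by (simp add: power2_eq_square)
  finally show ?thesis .
qed

lemma bessel:
  assumes "orthn S w k"
  shows "(\<Sum>d<k. (ip S x (w d))^2) \<le> ip S x x"
  using res_nsq[OF assms, of x] ip_nonneg[of S "\<lambda>s. x s - prj S w k x s"] by linarith

lemma res_orth:
  assumes "orthn S w k"
  shows "ip S (\<lambda>s. x s - prj S w k x s) (prj S w k y) = 0"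
proof -
  have "ip S (\<lambda>s. x s - prj S w k x s) (prj S w k y) = ip S x (prj S w k y) - ip S (prj S w k x) (prj S w k y)"
    by (simp only: ip_diff)
  also have "ip S x (prj S w k y) = (\<Sum>d<k. ip S y (w d) * ip S (w d) x)"
    by (subst ip_sym) (rule ip_prj_left)
  finally show ?thesis using ip_prj_prj[OF assms, of x y] by (simp add: ip_sym[of S "w _" x] mult.commute)
qed

lemma prj_diff: "prj S w k (\<lambda>s. a s - b s) s = prj S w k a s - prj S w k b s"
  unfolding prj_def by (simp add: ip_diff left_diff_distrib sum_subtractf)

lemma E_prj:
  assumes "orthn S w k"
  shows "ip S (\<lambda>s. a s - prj S w k b s) (\<lambda>s. a s - prj S w k b s)
     \<le> ip S (\<lambda>s. a s - prj S w k a s) (\<lambda>s. a s - prj S w k a s) + ip S (\<lambda>s. a s - b s) (\<lambda>s. a s - b s)"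
proof -
  define r where "r = (\<lambda>s. a s - prj S w k a s)"
  define q where "q = prj S w k (\<lambda>s. a s - b s)"
  have eq: "(\<lambda>s. a s - prj S w k b s) = (\<lambda>s. r s + q s)"
    unfolding r_def q_def by (auto simp: prj_diff)
  have o: "ip S r q = 0" unfolding r_def q_def by (rule res_orth[OF assms])
  have "ip S (\<lambda>s. r s + q s) (\<lambda>s. r s + q s) = ip S r r + 2 * ip S r q + ip S q q"
    by (simp only: ip_add ip_add_r ip_sym[of S q r])
  also have "ip S q q \<le> ip S (\<lambda>s. a s - b s) (\<lambda>s. a s - b s)"
    unfolding q_def ip_prj_prj[OF assms] using bessel[OF assms] by (simp add: power2_eq_square)
  finally show ?thesis unfolding eq using o by (simp add: r_def)
qed

definition ev :: "'a \<Rightarrow> 'a \<Rightarrow> real" where "ev c = (\<lambda>s. if s = c then 1 else 0)"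

lemma ip_ev: assumes "finite S" "c \<in> S" shows "ip S (ev c) x = x c"
proof -
  have "ip S (ev c) x = (\<Sum>s\<in>S. if s = c then x s else 0)"
    unfolding ip_def ev_def by (rule sum.cong) auto
  thus ?thesis using assms by (simp add: sum.delta')
qed

lemma ev_same [simp]: "ev c c = 1" unfolding ev_def by simp

lemma ip_self_zero:
  assumes "finite S" "ip S x x = 0" "s \<in> S" shows "x s = 0"
proof -
  have "(\<Sum>s\<in>S. (x s)^2) = 0" using assms(2) unfolding ip_def by (simp add: power2_eq_square)
  then have "\<forall>s\<in>S. (x s)^2 = 0" using assms(1) by (subst (asm) sum_nonneg_eq_0_iff) auto
  thus ?thesis using assms(3) by simp
qed

lemma trace_res:
  assumes "finite S" "orthn S w k"
  shows "(\<Sum>c\<in>S. ip S (\<lambda>s. ev c s - prj S w k (ev c) s) (\<lambda>s. ev c s - prj S w k (ev c) s)) = real (card S) - real k"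
proof -
  have "(\<Sum>c\<in>S. ip S (\<lambda>s. ev c s - prj S w k (ev c) s) (\<lambda>s. ev c s - prj S w k (ev c) s))
     = (\<Sum>c\<in>S. 1 - (\<Sum>d<k. (w d c)^2))"
    using assms by (intro sum.cong) (auto simp: res_nsq ip_ev)
  also have "\<dots> = real (card S) - (\<Sum>c\<in>S. \<Sum>d<k. (w d c)^2)"
    by (simp add: sum_subtractf)
  also have "(\<Sum>c\<in>S. \<Sum>d<k. (w d c)^2) = (\<Sum>d<k. \<Sum>c\<in>S. (w d c)^2)"
    by (rule sum.swap)
  also have "(\<Sum>d<k. \<Sum>c\<in>S. (w d c)^2) = (\<Sum>d<k. 1)"
    using assms(2) unfolding orthn_def ip_def by (intro sum.cong) (auto simp: power2_eq_square)
  finally show ?thesis by simp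
qed

lemma orth_completion:
  assumes "finite S" "orthn S w k" "k < card S"
  shows "\<exists>x. (\<forall>d<k. ip S (w d) x = 0) \<and> ip S x x = 1"
proof -
  define r where "r = (\<lambda>c s. ev c s - prj S w k (ev c) s)"
  have "(\<Sum>c\<in>S. ip S (r c) (r c)) > 0" using trace_res[OF assms(1,2)] assms(3) unfolding r_def by simp
  then obtain c where c: "c \<in> S" "ip S (r c) (r c) \<noteq> 0"
    using sum.neutral[of S "\<lambda>c. ip S (r c) (r c)"] by (metis less_irrefl)
  then have pos: "ip S (r c) (r c) > 0" using ip_nonneg[of S "r c"] by linarith
  define x where "x = (\<lambda>s. (1 / sqrt (ip S (r c) (r c))) * r c s)"
  have "ip S x x = (1 / sqrt (ip S (r c) (r c)))^2 * ip S (r c) (r c)"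
    unfolding x_def ip_scale2 by (simp add: power2_eq_square)
  also have "\<dots> = 1" using pos by (simp add: power_divide)
  finally have 1: "ip S x x = 1" .
  have "ip S (w d) x = 0" if "d < k" for d
  proof -
    have "ip S (r c) (w d) = 0"
      unfolding r_def ip_diff using ip_prj_w[OF assms(2) that] by simp
    thus ?thesis unfolding x_def by (subst ip_sym) (simp only: ip_scale mult_zero_right)
  qed
  with 1 show ?thesis by blast
qed

lemma orthn_extend:
  assumes "orthn S w k" "\<forall>d<k. ip S (w d) x = 0" "ip S x x = 1"
  shows "orthn S (w(k := x)) (Suc k)"
  using assms unfolding orthn_def by (auto simp: less_Suc_eq ip_sym[of S x "w _"])

lemma orthn_span:
  assumes "finite S" "orthn S w (card S)" "c \<in> S" "s \<in> S"
  shows "(\<Sum>d<card S. w d c * w d s) = (if s = c then 1 else 0)"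
proof -
  define r where "r = (\<lambda>c s. ev c s - prj S w (card S) (ev c) s)"
  have z: "(\<Sum>c\<in>S. ip S (r c) (r c)) = 0" using trace_res[OF assms(1,2)] unfolding r_def by simp
  have "\<forall>c\<in>S. ip S (r c) (r c) = 0"
    using z assms(1) by (subst (asm) sum_nonneg_eq_0_iff) (auto simp: ip_nonneg)
  then have "r c s = 0" using ip_self_zero[OF assms(1)] assms(3,4) by blast
  hence "ev c s = (\<Sum>d<card S. ip S (ev c) (w d) * w d s)" unfolding r_def prj_def by simp
  also have "\<dots> = (\<Sum>d<card S. w d c * w d s)" using assms(1,3) by (simp add: ip_ev)
  finally show ?thesis by (simp add: ev_def)
qed



definition mulv :: "'c set \<Rightarrow> ('r \<Rightarrow> 'c \<Rightarrow> real) \<Rightarrow> ('c \<Rightarrow> real) \<Rightarrow> 'r \<Rightarrow> real" where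
  "mulv Cs M x = (\<lambda>r. \<Sum>c\<in>Cs. M r c * x c)"

definition mtv :: "'r set \<Rightarrow> ('r \<Rightarrow> 'c \<Rightarrow> real) \<Rightarrow> ('r \<Rightarrow> real) \<Rightarrow> 'c \<Rightarrow> real" where
  "mtv Rs M y = (\<lambda>c. \<Sum>r\<in>Rs. M r c * y r)"

lemma adjoint: "ip Rs (mulv Cs M x) y = ip Cs x (mtv Rs M y)"
proof -
  have "ip Rs (mulv Cs M x) y = (\<Sum>r\<in>Rs. \<Sum>c\<in>Cs. M r c * x c * y r)"
    unfolding ip_def mulv_def by (simp add: sum_distrib_right)
  also have "\<dots> = (\<Sum>c\<in>Cs. \<Sum>r\<in>Rs. M r c * x c * y r)" by (rule sum.swap)
  also have "\<dots> = ip Cs x (mtv Rs M y)"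
    unfolding ip_def mtv_def by (simp add: sum_distrib_left mult.commute mult.left_commute)
  finally show ?thesis .
qed

lemma mulv_scale: "mulv Cs M (\<lambda>c. a * x c) = (\<lambda>r. a * mulv Cs M x r)"
  unfolding mulv_def by (simp add: sum_distrib_left mult.left_commute)

lemma mulv_cong: "(\<And>c. c \<in> Cs \<Longrightarrow> x c = x' c) \<Longrightarrow> mulv Cs M x = mulv Cs M x'"
  unfolding mulv_def by (auto intro!: sum.cong)

lemma ip_single_le:
  assumes "finite S" "c \<in> S" shows "(x c)^2 \<le> ip S x x"
proof -
  have "(x c)^2 = (\<Sum>s\<in>{c}. (x s)^2)" by simp
  also have "\<dots> \<le> (\<Sum>s\<in>S. (x s)^2)" using assms by (intro sum_mono2) auto
  finally show ?thesis unfolding ip_def by (simp add: power2_eq_square)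
qed

lemma max_exists:
  fixes M :: "'r \<Rightarrow> 'c \<Rightarrow> real"
  assumes fin: "finite Cs" and finR: "finite Rs" and ne: "Cs \<noteq> {}"
  shows "\<exists>v. ip Cs v v = 1 \<and> (\<forall>x. ip Rs (mulv Cs M x) (mulv Cs M x) \<le> ip Rs (mulv Cs M v) (mulv Cs M v) * ip Cs x x)"
proof -
  define X where "X = product_topology (\<lambda>_. euclideanreal) Cs"
  define g where "g = (\<lambda>x. ip Rs (mulv Cs M x) (mulv Cs M x))"
  define h where "h = (\<lambda>x. ip Cs x x)"
  have cg: "continuous_map X euclideanreal g"
    unfolding X_def g_def ip_def mulv_def using fin finR
    by (intro continuous_intros) (auto intro: continuous_intros)
  have ch: "continuous_map X euclideanreal h"
    unfolding X_def h_def ip_def using fin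
    by (intro continuous_intros) (auto intro: continuous_intros)
  define K0 where "K0 = PiE Cs (\<lambda>_. {-1..1::real})"
  have cK0: "compactin X K0" unfolding X_def K0_def
    by (subst compactin_PiE) auto
  define K where "K = K0 \<inter> {x \<in> topspace X. h x \<in> {1}}"
  have clo: "closedin X {x \<in> topspace X. h x \<in> {1}}"
    by (rule closedin_continuous_map_preimage[OF ch]) auto
  have cK: "compactin X K"
    unfolding K_def using closed_Int_compactin[OF clo cK0] by (simp add: Int_commute)
  obtain c0 where c0: "c0 \<in> Cs" using ne by blast
  define e where "e = restrict (ev c0) Cs"
  have eK: "e \<in> K"
  proof -
    have "e \<in> K0" unfolding e_def K0_def by (auto simp: ev_def)
    moreover have "h e = 1"
    proof -
      have "h e = ip Cs (ev c0) (ev c0)" unfolding h_def e_def by (rule ip_cong) auto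
      also have "\<dots> = 1" using ip_ev[OF fin c0] by simp
      finally show ?thesis .
    qed
    moreover have "e \<in> topspace X" unfolding X_def e_def by simp
    ultimately show ?thesis unfolding K_def by simp
  qed
  have "compact (g ` K)" using image_compactin[OF cK cg] by simp
  moreover have "g ` K \<noteq> {}" using eK by blast
  ultimately obtain m where m: "m \<in> g ` K" "\<forall>y\<in>g ` K. y \<le> m"
    using compact_attains_sup by blast
  then obtain v where v: "v \<in> K" "g v = m" by blast
  have hv: "h v = 1" using v(1) unfolding K_def by simp
  have gmax: "g y \<le> g v" if "y \<in> K" for y using m(2) v(2) that by blast
  have "g x \<le> g v * h x" for x
  proof (cases "h x = 0")
    case True
    have "x c = 0" if "c \<in> Cs" for c using ip_self_zero[OF fin _ that] True unfolding h_def by simp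
    hence "mulv Cs M x = mulv Cs M (\<lambda>_. 0)" by (intro mulv_cong) simp
    hence "mulv Cs M x = (\<lambda>_. 0)" unfolding mulv_def by simp
    hence "g x = 0" unfolding g_def ip_def by simp
    moreover have "g v \<ge> 0" unfolding g_def by (rule ip_nonneg)
    ultimately show ?thesis using True by simp
  next
    case False
    hence hp: "h x > 0" using ip_nonneg[of Cs x] unfolding h_def by linarith
    define a where "a = 1 / sqrt (h x)"
    define y where "y = restrict (\<lambda>c. a * x c) Cs"
    have hy: "h y = 1"
    proof -
      have "h y = h (\<lambda>c. a * x c)" unfolding h_def y_def by (rule ip_cong) auto
      also have "\<dots> = a * a * h x" unfolding h_def by (rule ip_scale2)
      also have "\<dots> = 1" unfolding a_def using hp by (simp add: real_sqrt_mult[symmetric])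
      finally show ?thesis .
    qed
    have "y \<in> K0" unfolding K0_def
    proof (rule PiE_I)
      fix c assume c: "c \<in> Cs"
      have "(y c)^2 \<le> 1" using ip_single_le[OF fin c, of y] hy unfolding h_def by simp
      hence "\<bar>y c\<bar> \<le> 1" using abs_le_square_iff[of "y c" 1] by simp
      thus "y c \<in> {-1..1}" by auto
    next
      fix c assume "c \<notin> Cs" thus "y c = undefined" unfolding y_def by simp
    qed
    moreover have "y \<in> topspace X" unfolding X_def y_def by simp
    ultimately have yK: "y \<in> K" using hy unfolding K_def by simp
    have "mulv Cs M y = mulv Cs M (\<lambda>c. a * x c)" unfolding y_def by (rule mulv_cong) auto
    hence "g y = g (\<lambda>c. a * x c)" unfolding g_def by simp
    also have "\<dots> = a * a * g x" unfolding g_def mulv_scale ip_scale2 ..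
    finally have "a * a * g x \<le> g v" using gmax[OF yK] by simp
    hence "a * a * g x * h x \<le> g v * h x" using hp by (simp add: mult_right_mono)
    moreover have "a * a * h x = 1" unfolding a_def using hp by (simp add: real_sqrt_mult[symmetric])
    ultimately show ?thesis by (metis mult.assoc mult.commute mult.left_neutral)
  qed
  thus ?thesis using hv unfolding g_def h_def by blast
qed



lemma ip_expand: "ip S (\<lambda>s. a s + t * b s) (\<lambda>s. a s + t * b s) = ip S a a + 2 * t * ip S a b + t^2 * ip S b b"
  unfolding ip_def by (simp add: algebra_simps power2_eq_square sum.distrib sum_distrib_left)

lemma mulv_add: "mulv Cs M (\<lambda>c. x c + t * y c) = (\<lambda>r. mulv Cs M x r + t * mulv Cs M y r)"
  unfolding mulv_def by (simp add: algebra_simps sum.distrib sum_distrib_left)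

lemma eigen:
  fixes M :: "'r \<Rightarrow> 'c \<Rightarrow> real"
  assumes fin: "finite Cs" and v1: "ip Cs v v = 1"
    and mx: "\<forall>x. ip Rs (mulv Cs M x) (mulv Cs M x) \<le> ip Rs (mulv Cs M v) (mulv Cs M v) * ip Cs x x"
    and c: "c \<in> Cs"
  shows "mtv Rs M (mulv Cs M v) c = ip Rs (mulv Cs M v) (mulv Cs M v) * v c"
proof -
  define g where "g = (\<lambda>x. ip Rs (mulv Cs M x) (mulv Cs M x))"
  define l where "l = g v"
  define w where "w = (\<lambda>c. mtv Rs M (mulv Cs M v) c - l * v c)"
  define q where "q = ip Cs w w"
  have l0: "l \<ge> 0" unfolding l_def g_def by (rule ip_nonneg)
  have q0: "q \<ge> 0" unfolding q_def by (rule ip_nonneg)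
  have gw0: "g w \<ge> 0" unfolding g_def by (rule ip_nonneg)
  have Bvv: "ip Cs v (mtv Rs M (mulv Cs M v)) = l" unfolding l_def g_def by (simp add: adjoint)
  have vw: "ip Cs v w = 0" unfolding w_def ip_diff_r
    using Bvv v1 by (simp add: ip_sym[of Cs v "\<lambda>c. l * v c"] ip_scale)
  have Bvw: "ip Rs (mulv Cs M v) (mulv Cs M w) = q"
  proof -
    have "ip Rs (mulv Cs M v) (mulv Cs M w) = ip Rs (mulv Cs M w) (mulv Cs M v)" by (rule ip_sym)
    also have "\<dots> = ip Cs w (mtv Rs M (mulv Cs M v))" by (rule adjoint)
    also have "\<dots> = ip Cs w (\<lambda>c. w c + l * v c)" by (rule ip_cong) (auto simp: w_def)
    also have "\<dots> = q" unfolding ip_add_r q_def using vw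
      by (simp add: ip_sym[of Cs w "\<lambda>c. l * v c"] ip_scale ip_sym[of Cs v w])
    finally show ?thesis .
  qed
  define t where "t = 1 / (l + 1)"
  have t0: "t > 0" unfolding t_def using l0 by simp
  have "g (\<lambda>c. v c + t * w c) = l + 2 * t * q + t^2 * g w"
    unfolding g_def mulv_add ip_expand using Bvw by (simp add: l_def g_def)
  moreover have "ip Cs (\<lambda>c. v c + t * w c) (\<lambda>c. v c + t * w c) = 1 + t^2 * q"
    unfolding ip_expand using v1 vw q_def by simp
  moreover have "g (\<lambda>c. v c + t * w c) \<le> l * ip Cs (\<lambda>c. v c + t * w c) (\<lambda>c. v c + t * w c)"
    using mx unfolding g_def l_def by blast
  ultimately have "l + 2 * t * q + t^2 * g w \<le> l * (1 + t^2 * q)" by simp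
  moreover have "l * (1 + t^2 * q) = l + t * ((l * t) * q)" by (simp add: algebra_simps power2_eq_square)
  ultimately have A: "l + 2 * t * q + t^2 * g w \<le> l + t * ((l * t) * q)" by simp
  have B: "t^2 * g w \<ge> 0" using gw0 by simp
  have C: "t * (2 * q) = 2 * t * q" by simp
  have "t * (2 * q) \<le> t * ((l * t) * q)" using A B C by linarith
  hence "2 * q \<le> (l * t) * q" using t0 by simp
  moreover have "l * t \<le> 1" unfolding t_def using l0 by simp
  hence "(l * t) * q \<le> 1 * q" using q0 by (intro mult_right_mono) auto
  ultimately have "2 * q \<le> q" by simp
  hence "q = 0" using q0 by simp
  hence "w c = 0" using ip_self_zero[OF fin _ c] unfolding q_def by simp
  thus ?thesis unfolding w_def l_def g_def by simp
qed



definition resid :: "('r \<Rightarrow> 'c \<Rightarrow> real) \<Rightarrow> (nat \<Rightarrow> real) \<Rightarrow> (nat \<Rightarrow> 'r \<Rightarrow> real) \<Rightarrow> (nat \<Rightarrow> 'c \<Rightarrow> real) \<Rightarrow> nat \<Rightarrow> 'r \<Rightarrow> 'c \<Rightarrow> real" where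
  "resid M \<sigma> u v k = (\<lambda>r c. M r c - (\<Sum>d<k. \<sigma> d * u d r * v d c))"

definition svinv where
  "svinv Rs Cs M k \<sigma> u v \<longleftrightarrow>
     (\<forall>d<k. 0 \<le> \<sigma> d) \<and> (\<forall>d. Suc d < k \<longrightarrow> \<sigma> (Suc d) \<le> \<sigma> d) \<and> orthn Rs u k \<and> orthn Cs v k \<and>
     (\<forall>d<k. \<forall>c\<in>Cs. mtv Rs (resid M \<sigma> u v k) (u d) c = 0) \<and>
     (\<forall>d<k. \<forall>r\<in>Rs. mulv Cs (resid M \<sigma> u v k) (v d) r = 0) \<and>
     (\<forall>x. 0 < k \<longrightarrow> ip Rs (mulv Cs (resid M \<sigma> u v k) x) (mulv Cs (resid M \<sigma> u v k) x) \<le> (\<sigma> (k - 1))^2 * ip Cs x x)"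

lemma resid_Suc:
  "resid M (\<sigma>(k := s)) (u(k := a)) (v(k := b)) (Suc k) r c = resid M \<sigma> u v k r c - s * a r * b c"
proof -
  have "(\<Sum>d<k. (\<sigma>(k := s)) d * (u(k := a)) d r * (v(k := b)) d c) = (\<Sum>d<k. \<sigma> d * u d r * v d c)"
    by (intro sum.cong) auto
  thus ?thesis unfolding resid_def by simp
qed

lemma mtv_sub: "mtv Rs (\<lambda>r c. N r c - s * a r * b c) w c = mtv Rs N w c - s * b c * ip Rs a w"
proof -
  have "mtv Rs (\<lambda>r c. N r c - s * a r * b c) w c = (\<Sum>r\<in>Rs. N r c * w r - s * b c * (a r * w r))"
    unfolding mtv_def by (intro sum.cong) (auto simp: algebra_simps)
  thus ?thesis unfolding mtv_def ip_def by (simp add: sum_subtractf sum_distrib_left)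
qed

lemma mulv_sub: "mulv Cs (\<lambda>r c. N r c - s * a r * b c) w r = mulv Cs N w r - s * a r * ip Cs b w"
proof -
  have "mulv Cs (\<lambda>r c. N r c - s * a r * b c) w r = (\<Sum>c\<in>Cs. N r c * w c - s * a r * (b c * w c))"
    unfolding mulv_def by (intro sum.cong) (auto simp: algebra_simps)
  thus ?thesis unfolding mulv_def ip_def by (simp add: sum_subtractf sum_distrib_left)
qed

lemma mtv_scale: "mtv Rs N (\<lambda>r. t * y r) c = t * mtv Rs N y c"
  unfolding mtv_def by (simp add: sum_distrib_left mult.left_commute)

lemma step_generic:
  assumes inv: "svinv Rs Cs M k \<sigma> u v"
    and s0: "s \<ge> 0" and sle: "0 < k \<Longrightarrow> s \<le> \<sigma> (k - 1)"
    and ua: "\<forall>d<k. ip Rs (u d) a = 0" and aa: "ip Rs a a = 1"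
    and vb: "\<forall>d<k. ip Cs (v d) b = 0" and bb: "ip Cs b b = 1"
    and H3: "\<forall>r\<in>Rs. mulv Cs (resid M \<sigma> u v k) b r = s * a r"
    and H4: "\<forall>c\<in>Cs. mtv Rs (resid M \<sigma> u v k) a c = s * b c"
    and Hb: "\<forall>x. ip Rs (mulv Cs (resid M \<sigma> u v k) x) (mulv Cs (resid M \<sigma> u v k) x) \<le> s^2 * ip Cs x x"
  shows "svinv Rs Cs M (Suc k) (\<sigma>(k := s)) (u(k := a)) (v(k := b))"
proof -
  define Mk where "Mk = resid M \<sigma> u v k"
  define M' where "M' = (\<lambda>r c. Mk r c - s * a r * b c)"
  have R: "resid M (\<sigma>(k := s)) (u(k := a)) (v(k := b)) (Suc k) = M'"
    unfolding M'_def Mk_def by (intro ext) (simp add: resid_Suc)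
  have H1: "\<forall>d<k. \<forall>c\<in>Cs. mtv Rs Mk (u d) c = 0" and H2: "\<forall>d<k. \<forall>r\<in>Rs. mulv Cs Mk (v d) r = 0"
    using inv unfolding svinv_def Mk_def by auto
  have i1: "\<forall>d<Suc k. 0 \<le> (\<sigma>(k := s)) d" using inv s0 unfolding svinv_def by (auto simp: less_Suc_eq)
  have i2: "\<forall>d. Suc d < Suc k \<longrightarrow> (\<sigma>(k := s)) (Suc d) \<le> (\<sigma>(k := s)) d"
  proof (intro allI impI)
    fix d assume "Suc d < Suc k"
    then consider "Suc d < k" | "Suc d = k" by linarith
    thus "(\<sigma>(k := s)) (Suc d) \<le> (\<sigma>(k := s)) d"
    proof cases
      case 1 thus ?thesis using inv unfolding svinv_def by auto
    next
      case 2 thus ?thesis using sle by auto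
    qed
  qed
  have i3: "orthn Rs (u(k := a)) (Suc k)" using inv ua aa orthn_extend unfolding svinv_def by blast
  have i4: "orthn Cs (v(k := b)) (Suc k)" using inv vb bb orthn_extend unfolding svinv_def by blast
  have i5: "\<forall>d<Suc k. \<forall>c\<in>Cs. mtv Rs M' ((u(k := a)) d) c = 0"
  proof (intro allI impI ballI)
    fix d c assume d: "d < Suc k" and c: "c \<in> Cs"
    show "mtv Rs M' ((u(k := a)) d) c = 0"
    proof (cases "d = k")
      case True thus ?thesis unfolding M'_def mtv_sub using H4 c aa by (simp add: Mk_def)
    next
      case False
      hence "d < k" using d by simp
      thus ?thesis unfolding M'_def mtv_sub using H1 c ua False by (simp add: ip_sym[of Rs a])
    qed
  qed
  have i6: "\<forall>d<Suc k. \<forall>r\<in>Rs. mulv Cs M' ((v(k := b)) d) r = 0"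
  proof (intro allI impI ballI)
    fix d r assume d: "d < Suc k" and r: "r \<in> Rs"
    show "mulv Cs M' ((v(k := b)) d) r = 0"
    proof (cases "d = k")
      case True thus ?thesis unfolding M'_def mulv_sub using H3 r bb by (simp add: Mk_def)
    next
      case False
      hence "d < k" using d by simp
      thus ?thesis unfolding M'_def mulv_sub using H2 r vb False by (simp add: ip_sym[of Cs b])
    qed
  qed
  have i7: "ip Rs (mulv Cs M' x) (mulv Cs M' x) \<le> s^2 * ip Cs x x" for x
  proof -
    define \<beta> where "\<beta> = s * ip Cs b x"
    have e: "mulv Cs Mk x = (\<lambda>r. mulv Cs M' x r + \<beta> * a r)"
      unfolding M'_def mulv_sub \<beta>_def by (auto simp: ip_sym[of Cs b x])
    have o: "ip Rs (mulv Cs M' x) a = 0"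
    proof -
      have "ip Rs (mulv Cs M' x) a = ip Cs x (mtv Rs M' a)" by (rule adjoint)
      also have "\<dots> = ip Cs x (\<lambda>_. 0)" using i5[rule_format, of k] by (intro ip_cong) auto
      finally show ?thesis by (simp add: ip_def)
    qed
    have "ip Rs (mulv Cs Mk x) (mulv Cs Mk x) = ip Rs (mulv Cs M' x) (mulv Cs M' x) + \<beta>^2"
      unfolding e ip_expand o aa by simp
    moreover have "ip Rs (mulv Cs Mk x) (mulv Cs Mk x) \<le> s^2 * ip Cs x x" using Hb Mk_def by blast
    ultimately show ?thesis by (smt (verit) zero_le_power2)
  qed
  show ?thesis unfolding svinv_def R using i1 i2 i3 i4 i5 i6 i7 by auto
qed



lemma mulv_ev: "finite Cs \<Longrightarrow> c \<in> Cs \<Longrightarrow> mulv Cs N (ev c) r = N r c"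
  unfolding mulv_def ev_def by (simp add: if_distrib sum.delta' cong: if_cong)

lemma step_exists:
  assumes finR: "finite Rs" and finC: "finite Cs"
    and k: "k < card Rs" "k < card Cs"
    and inv: "svinv Rs Cs M k \<sigma> u v"
  shows "\<exists>\<sigma>' u' v'. svinv Rs Cs M (Suc k) \<sigma>' u' v'"
proof -
  define Mk where "Mk = resid M \<sigma> u v k"
  define g where "g = (\<lambda>x. ip Rs (mulv Cs Mk x) (mulv Cs Mk x))"
  have neC: "Cs \<noteq> {}" using k by auto
  obtain vk where vk1: "ip Cs vk vk = 1" and mx: "\<forall>x. g x \<le> g vk * ip Cs x x"
    using max_exists[OF finC finR neC, of Mk] unfolding g_def by blast
  have g0: "g vk \<ge> 0" unfolding g_def by (rule ip_nonneg)
  define s where "s = sqrt (g vk)"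
  have s0: "s \<ge> 0" unfolding s_def using g0 by simp
  have ss: "s^2 = g vk" unfolding s_def using g0 by simp
  have sle: "s \<le> \<sigma> (k - 1)" if "0 < k"
  proof -
    have "g vk \<le> (\<sigma> (k - 1))^2 * ip Cs vk vk" using inv that unfolding svinv_def g_def Mk_def by blast
    hence "g vk \<le> (\<sigma> (k - 1))^2" using vk1 by simp
    moreover have "\<sigma> (k - 1) \<ge> 0" using inv that unfolding svinv_def by auto
    ultimately show ?thesis unfolding s_def using real_sqrt_le_mono by fastforce
  qed
  have Hb: "\<forall>x. g x \<le> s^2 * ip Cs x x" using mx ss by simp
  have H1: "\<forall>d<k. \<forall>c\<in>Cs. mtv Rs Mk (u d) c = 0" and H2: "\<forall>d<k. \<forall>r\<in>Rs. mulv Cs Mk (v d) r = 0"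
    and ou: "orthn Rs u k" and ov: "orthn Cs v k"
    using inv unfolding svinv_def Mk_def by auto
  show ?thesis
  proof (cases "g vk > 0")
    case True
    hence sp: "s > 0" unfolding s_def by simp
    define a where "a = (\<lambda>r. (1 / s) * mulv Cs Mk vk r)"
    have H3: "\<forall>r\<in>Rs. mulv Cs Mk vk r = s * a r" unfolding a_def using sp by simp
    have H4: "\<forall>c\<in>Cs. mtv Rs Mk a c = s * vk c"
    proof
      fix c assume c: "c \<in> Cs"
      have "mtv Rs Mk a c = (1 / s) * mtv Rs Mk (mulv Cs Mk vk) c" unfolding a_def mtv_scale ..
      also have "\<dots> = (1 / s) * (g vk * vk c)" using eigen[OF finC vk1 _ c, of Rs Mk] mx unfolding g_def by simp
      also have "\<dots> = s * vk c" using sp ss[symmetric] by (simp add: power2_eq_square)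
      finally show "mtv Rs Mk a c = s * vk c" .
    qed
    have aa: "ip Rs a a = 1" unfolding a_def ip_scale2 using ss sp True by (simp add: g_def power2_eq_square)
    have ua: "\<forall>d<k. ip Rs (u d) a = 0"
    proof (intro allI impI)
      fix d assume d: "d < k"
      have "ip Rs (mulv Cs Mk vk) (u d) = ip Cs vk (mtv Rs Mk (u d))" by (rule adjoint)
      also have "\<dots> = ip Cs vk (\<lambda>_. 0)" using H1 d by (intro ip_cong) auto
      finally have "ip Rs (mulv Cs Mk vk) (u d) = 0" by (simp add: ip_def)
      thus "ip Rs (u d) a = 0" unfolding a_def by (subst ip_sym) (simp only: ip_scale mult_zero_right)
    qed
    have vb: "\<forall>d<k. ip Cs (v d) vk = 0"
    proof (intro allI impI)
      fix d assume d: "d < k"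
      have "ip Cs (v d) (mtv Rs Mk (mulv Cs Mk vk)) = ip Cs (v d) (\<lambda>c. g vk * vk c)"
        using eigen[OF finC vk1 _, of Rs Mk] mx unfolding g_def by (intro ip_cong) auto
      also have "\<dots> = g vk * ip Cs (v d) vk" by (subst ip_sym) (simp add: ip_scale ip_sym)
      finally have 1: "ip Cs (v d) (mtv Rs Mk (mulv Cs Mk vk)) = g vk * ip Cs (v d) vk" .
      have "ip Cs (v d) (mtv Rs Mk (mulv Cs Mk vk)) = ip Rs (mulv Cs Mk (v d)) (mulv Cs Mk vk)"
        by (rule adjoint[symmetric])
      also have "\<dots> = ip Rs (\<lambda>_. 0) (mulv Cs Mk vk)" using H2 d by (intro ip_cong) auto
      finally have "ip Cs (v d) (mtv Rs Mk (mulv Cs Mk vk)) = 0" by (simp add: ip_def)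
      thus "ip Cs (v d) vk = 0" using 1 True by simp
    qed
    show ?thesis
      using step_generic[OF inv s0 sle ua aa vb vk1 _ _ ] H3 H4 Hb unfolding Mk_def g_def by blast
  next
    case False
    hence gz: "g vk = 0" using g0 by simp
    hence sz: "s = 0" unfolding s_def by simp
    have Z: "Mk r c = 0" if r: "r \<in> Rs" and c: "c \<in> Cs" for r c
    proof -
      have "g (ev c) \<le> 0" using mx gz by (metis mult_zero_left)
      hence "g (ev c) = 0" using ip_nonneg[of Rs "mulv Cs Mk (ev c)"] unfolding g_def by linarith
      hence "mulv Cs Mk (ev c) r = 0" using ip_self_zero[OF finR _ r] unfolding g_def by blast
      thus ?thesis using mulv_ev[OF finC c, of Mk r] by simp
    qed
    obtain a where ua: "\<forall>d<k. ip Rs (u d) a = 0" and aa: "ip Rs a a = 1"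
      using orth_completion[OF finR ou k(1)] by blast
    obtain b where vb: "\<forall>d<k. ip Cs (v d) b = 0" and bb: "ip Cs b b = 1"
      using orth_completion[OF finC ov k(2)] by blast
    have H3: "\<forall>r\<in>Rs. mulv Cs Mk b r = s * a r" unfolding sz mulv_def using Z by simp
    have H4: "\<forall>c\<in>Cs. mtv Rs Mk a c = s * b c" unfolding sz mtv_def using Z by simp
    show ?thesis
      using step_generic[OF inv s0 sle ua aa vb bb] H3 H4 Hb unfolding Mk_def g_def by blast
  qed
qed

lemma svinv_all:
  assumes finR: "finite Rs" and finC: "finite Cs" and "k \<le> min (card Rs) (card Cs)"
  shows "\<exists>\<sigma> u v. svinv Rs Cs M k \<sigma> u v"
  using assms(3)
proof (induction k)
  case 0
  show ?case unfolding svinv_def orthn_def by auto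
next
  case (Suc k)
  then obtain \<sigma> u v where "svinv Rs Cs M k \<sigma> u v" by auto
  thus ?case using step_exists[OF finR finC] Suc.prems by auto
qed

lemma svd_exists:
  fixes M :: "'r \<Rightarrow> 'c \<Rightarrow> real"
  assumes finR: "finite Rs" and finC: "finite Cs"
  shows "\<exists>\<sigma> u v. is_svd Rs Cs M \<sigma> u v"
proof -
  define m where "m = min (card Rs) (card Cs)"
  obtain \<sigma> u v where inv: "svinv Rs Cs M m \<sigma> u v" using svinv_all[OF finR finC, of m M] m_def by auto
  define N where "N = resid M \<sigma> u v m"
  have H1: "\<forall>d<m. \<forall>c\<in>Cs. mtv Rs N (u d) c = 0" and H2: "\<forall>d<m. \<forall>r\<in>Rs. mulv Cs N (v d) r = 0"
    and ou: "orthn Rs u m" and ov: "orthn Cs v m"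
    using inv unfolding svinv_def N_def by auto
  have Z: "N r c = 0" if r: "r \<in> Rs" and c: "c \<in> Cs" for r c
  proof (cases "m = card Cs")
    case True
    have "N r c = (\<Sum>c'\<in>Cs. N r c' * (if c = c' then 1 else 0))"
      using finC c by (simp add: if_distrib sum.delta cong: if_cong)
    also have "\<dots> = (\<Sum>c'\<in>Cs. N r c' * (\<Sum>d<m. v d c' * v d c))"
      using orthn_span[OF finC, of v] ov True c by (intro sum.cong) auto
    also have "\<dots> = (\<Sum>d<m. v d c * mulv Cs N (v d) r)"
      unfolding mulv_def by (simp add: sum_distrib_left sum_distrib_right sum.swap[of _ Cs] mult.commute mult.left_commute)
    also have "\<dots> = 0" using H2 r by simp
    finally show ?thesis .
  next
    case False
    hence mR: "m = card Rs" unfolding m_def by linarith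
    have "N r c = (\<Sum>r'\<in>Rs. N r' c * (if r = r' then 1 else 0))"
      using finR r by (simp add: if_distrib sum.delta cong: if_cong)
    also have "\<dots> = (\<Sum>r'\<in>Rs. N r' c * (\<Sum>d<m. u d r' * u d r))"
      using orthn_span[OF finR, of u] ou mR r by (intro sum.cong) auto
    also have "\<dots> = (\<Sum>d<m. u d r * mtv Rs N (u d) c)"
      unfolding mtv_def by (simp add: sum_distrib_left sum_distrib_right sum.swap[of _ Rs] mult.commute mult.left_commute)
    also have "\<dots> = 0" using H1 c by simp
    finally show ?thesis .
  qed
  have "is_svd Rs Cs M \<sigma> u v"
    unfolding is_svd_def Let_def m_def[symmetric]
  proof (intro conjI)
    show "\<forall>d<m. 0 \<le> \<sigma> d" "\<forall>d. Suc d < m \<longrightarrow> \<sigma> (Suc d) \<le> \<sigma> d" using inv unfolding svinv_def by auto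
    show "\<forall>d<m. \<forall>d'<m. (\<Sum>r\<in>Rs. u d r * u d' r) = (if d = d' then 1 else 0)"
      using ou unfolding orthn_def ip_def by auto
    show "\<forall>d<m. \<forall>d'<m. (\<Sum>c\<in>Cs. v d c * v d' c) = (if d = d' then 1 else 0)"
      using ov unfolding orthn_def ip_def by auto
    show "\<forall>r\<in>Rs. \<forall>c\<in>Cs. M r c = (\<Sum>d<m. \<sigma> d * u d r * v d c)"
      using Z unfolding N_def resid_def by auto
  qed
  thus ?thesis by blast
qed



lemma sorted_trans:
  assumes "\<forall>d. Suc d < m \<longrightarrow> (\<sigma>::nat\<Rightarrow>real) (Suc d) \<le> \<sigma> d"
  shows "j \<le> d \<Longrightarrow> d < m \<Longrightarrow> \<sigma> d \<le> \<sigma> j"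
proof (induction d)
  case 0 thus ?case by simp
next
  case (Suc d)
  show ?case
  proof (cases "j = Suc d")
    case True thus ?thesis by simp
  next
    case False
    hence "j \<le> d" using Suc.prems by simp
    hence "\<sigma> d \<le> \<sigma> j" using Suc by simp
    moreover have "\<sigma> (Suc d) \<le> \<sigma> d" using assms Suc.prems by blast
    ultimately show ?thesis by simp
  qed
qed

lemma entropy_tail:
  fixes \<sigma> :: "nat \<Rightarrow> real" and m R :: nat
  assumes nonneg: "\<forall>d<m. 0 \<le> \<sigma> d" and sorted: "\<forall>d. Suc d < m \<longrightarrow> \<sigma> (Suc d) \<le> \<sigma> d"
    and S: "S = (\<Sum>d<m. (\<sigma> d)^2)" and Spos: "S > 0"
  shows "(\<Sum>d\<in>{R..<m}. (\<sigma> d)^2 / S) * ln (real R + 1) \<le> - (\<Sum>d<m. ((\<sigma> d)^2 / S) * ln ((\<sigma> d)^2 / S))"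
proof -
  define \<rho> where "\<rho> = (\<lambda>d. (\<sigma> d)^2 / S)"
  have \<rho>0: "\<rho> d \<ge> 0" for d unfolding \<rho>_def using Spos by simp
  have sum1: "(\<Sum>d<m. \<rho> d) = 1" unfolding \<rho>_def using Spos S by (simp add: sum_divide_distrib[symmetric])
  have \<rho>le: "\<rho> j \<ge> \<rho> d" if "j \<le> d" "d < m" for j d
  proof -
    have "\<sigma> d \<le> \<sigma> j" using sorted_trans[OF sorted that] .
    moreover have "0 \<le> \<sigma> d" using nonneg that by simp
    ultimately have "(\<sigma> d)^2 \<le> (\<sigma> j)^2" by (simp add: power_mono)
    thus ?thesis unfolding \<rho>_def using Spos by (simp add: divide_right_mono)
  qed
  have \<rho>1: "\<rho> d \<le> 1" if "d < m" for d
  proof -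
    have "\<rho> d \<le> (\<Sum>j<m. \<rho> j)" using that \<rho>0 by (intro member_le_sum) auto
    thus ?thesis using sum1 by simp
  qed
  have \<rho>small: "real (d + 1) * \<rho> d \<le> 1" if "d < m" for d
  proof -
    have "real (d + 1) * \<rho> d = (\<Sum>j<Suc d. \<rho> d)" by simp
    also have "\<dots> \<le> (\<Sum>j<Suc d. \<rho> j)" using \<rho>le that by (intro sum_mono) auto
    also have "\<dots> \<le> (\<Sum>j<m. \<rho> j)" using that \<rho>0 by (intro sum_mono2) auto
    finally show ?thesis using sum1 by simp
  qed
  have trm: "(if R \<le> d then \<rho> d * ln (real R + 1) else 0) \<le> - (\<rho> d * ln (\<rho> d))" if d: "d < m" for d
  proof (cases "\<rho> d = 0")
    case True thus ?thesis by simp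
  next
    case False
    hence pos: "\<rho> d > 0" using \<rho>0[of d] by simp
    show ?thesis
    proof (cases "R \<le> d")
      case True
      have "real (R + 1) * \<rho> d \<le> real (d + 1) * \<rho> d" using True pos by (intro mult_right_mono) auto
      hence "real (R + 1) * \<rho> d \<le> 1" using \<rho>small[OF d] by simp
      hence "\<rho> d \<le> 1 / (real R + 1)" using pos by (simp add: field_simps)
      hence "ln (\<rho> d) \<le> ln (1 / (real R + 1))" using pos by simp
      hence "ln (\<rho> d) \<le> - ln (real R + 1)" by (simp add: ln_div)
      hence "\<rho> d * ln (\<rho> d) \<le> \<rho> d * (- ln (real R + 1))" using pos by (intro mult_left_mono) auto
      hence "\<rho> d * ln (real R + 1) \<le> - (\<rho> d * ln (\<rho> d))" by simp
      thus ?thesis using True by simp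
    next
      case False
      have "ln (\<rho> d) \<le> 0" using pos \<rho>1[OF d] by simp
      hence "0 \<le> - (\<rho> d * ln (\<rho> d))" using pos by (simp add: mult_nonneg_nonpos)
      thus ?thesis using False by simp
    qed
  qed
  have "(\<Sum>d\<in>{R..<m}. \<rho> d) * ln (real R + 1) = (\<Sum>d\<in>{R..<m}. \<rho> d * ln (real R + 1))"
    by (simp add: sum_distrib_right)
  also have "\<dots> = (\<Sum>d<m. if R \<le> d then \<rho> d * ln (real R + 1) else 0)"
  proof -
    have "(\<Sum>d<m. if R \<le> d then \<rho> d * ln (real R + 1) else 0) = (\<Sum>d\<in>{d. d < m \<and> R \<le> d}. \<rho> d * ln (real R + 1))"
      by (simp add: sum.If_cases lessThan_def Collect_conj_eq Int_commute)
    also have "{d. d < m \<and> R \<le> d} = {R..<m}" by auto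
    finally show ?thesis by simp
  qed
  also have "\<dots> \<le> (\<Sum>d<m. - (\<rho> d * ln (\<rho> d)))" using trm by (intro sum_mono) auto
  also have "\<dots> = - (\<Sum>d<m. \<rho> d * ln (\<rho> d))" by (simp add: sum_negf)
  finally show ?thesis unfolding \<rho>_def .
qed

lemma tail_bound:
  fixes \<sigma> :: "nat \<Rightarrow> real" and m R :: nat
  assumes nonneg: "\<forall>d<m. 0 \<le> \<sigma> d" and sorted: "\<forall>d. Suc d < m \<longrightarrow> \<sigma> (Suc d) \<le> \<sigma> d"
    and S: "S = (\<Sum>d<m. (\<sigma> d)^2)" and R: "R \<ge> 1" and c: "c > 0"
    and H: "(if S = 0 then 0 else - (\<Sum>d<m. ((\<sigma> d)^2 / S) * ln ((\<sigma> d)^2 / S))) \<le> e / (c * S) * ln (real R)"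
    and e: "e \<ge> 0"
  shows "(\<Sum>d\<in>{R..<m}. (\<sigma> d)^2) \<le> e / c"
proof (cases "S = 0")
  case True
  have "(\<Sum>d\<in>{R..<m}. (\<sigma> d)^2) \<le> (\<Sum>d<m. (\<sigma> d)^2)" by (intro sum_mono2) auto
  moreover have "e / c \<ge> 0" using e c by simp
  ultimately show ?thesis using True S by simp
next
  case False
  have S0: "S \<ge> 0" unfolding S by (intro sum_nonneg) auto
  hence Sp: "S > 0" using False by simp
  define T where "T = (\<Sum>d\<in>{R..<m}. (\<sigma> d)^2)"
  have "(T / S) * ln (real R + 1) \<le> e / (c * S) * ln (real R)"
    using entropy_tail[OF nonneg sorted S Sp, of R] H False unfolding T_def
    by (simp add: sum_divide_distrib)
  moreover have "(T / S) * ln (real R + 1) = (T * ln (real R + 1)) / S" by simp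
  moreover have "e / (c * S) * ln (real R) = ((e / c) * ln (real R)) / S" by simp
  ultimately have h: "(T * ln (real R + 1)) / S \<le> ((e / c) * ln (real R)) / S" by (simp only:)
  have "(T * ln (real R + 1)) / S * S \<le> ((e / c) * ln (real R)) / S * S"
    using h Sp by (intro mult_right_mono) auto
  hence 1: "T * ln (real R + 1) \<le> (e / c) * ln (real R)" using Sp by simp
  have "ln (real R) \<le> ln (real R + 1)" using R by simp
  moreover have "e / c \<ge> 0" using e c by simp
  ultimately have "(e / c) * ln (real R) \<le> (e / c) * ln (real R + 1)" by (rule mult_left_mono)
  hence "T * ln (real R + 1) \<le> (e / c) * ln (real R + 1)" using 1 by linarith
  moreover have "ln (real R + 1) > 0" using R by simp
  ultimately have "T \<le> e / c" by (meson mult_le_cancel_right_pos)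
  thus ?thesis unfolding T_def .
qed



definition join :: "nat set \<Rightarrow> (nat \<Rightarrow> nat) \<Rightarrow> (nat \<Rightarrow> nat) \<Rightarrow> nat \<Rightarrow> nat" where
  "join K y z = (\<lambda>n. if n \<in> K then y n else z n)"

lemma finite_tidx: "finite K \<Longrightarrow> finite (tidx D K)"
  unfolding tidx_def by (intro finite_PiE) auto

lemma join_tidx: "y \<in> tidx D K1 \<Longrightarrow> z \<in> tidx D K2 \<Longrightarrow> join K1 y z \<in> tidx D (K1 \<union> K2)"
  unfolding tidx_def join_def by (auto simp: PiE_def extensional_def Pi_def)

lemma join_restrict: "y \<in> tidx D K \<Longrightarrow> restrict (join K y z) K = y"
  unfolding tidx_def join_def by (auto simp: PiE_def extensional_def restrict_def)

lemma restrict_tidx: "x \<in> tidx D U \<Longrightarrow> K \<subseteq> U \<Longrightarrow> restrict x K \<in> tidx D K"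
  unfolding tidx_def by (auto simp: PiE_def extensional_def restrict_def Pi_def)

lemma join_join1: "join K y (join K y0 z) = join K y z"
  unfolding join_def by auto

lemma join_restrict_self: "join K (restrict x K) x = x"
  unfolding join_def by auto

lemma bij_join:
  assumes "K1 \<inter> K2 = {}"
  shows "bij_betw (\<lambda>(y1, y2). join K1 y1 y2) (tidx D K1 \<times> tidx D K2) (tidx D (K1 \<union> K2))"
proof (rule bij_betw_byWitness[where f' = "\<lambda>x. (restrict x K1, restrict x K2)"])
  show "\<forall>a\<in>tidx D K1 \<times> tidx D K2. (restrict ((\<lambda>(y1, y2). join K1 y1 y2) a) K1, restrict ((\<lambda>(y1, y2). join K1 y1 y2) a) K2) = a"
  proof
    fix a assume a: "a \<in> tidx D K1 \<times> tidx D K2"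
    obtain y1 y2 where a': "a = (y1, y2)" by fastforce
    have y1: "y1 \<in> tidx D K1" and y2: "y2 \<in> tidx D K2" using a a' by auto
    have "restrict (join K1 y1 y2) K2 = y2"
    proof
      fix n show "restrict (join K1 y1 y2) K2 n = y2 n"
        using y2 assms unfolding tidx_def join_def restrict_def by (cases "n \<in> K2") (auto simp: PiE_def extensional_def)
    qed
    thus "(restrict ((\<lambda>(y1, y2). join K1 y1 y2) a) K1, restrict ((\<lambda>(y1, y2). join K1 y1 y2) a) K2) = a"
      using join_restrict[OF y1] a' by simp
  qed
  show "\<forall>a'\<in>tidx D (K1 \<union> K2). (\<lambda>(y1, y2). join K1 y1 y2) (restrict a' K1, restrict a' K2) = a'"
  proof
    fix x assume x: "x \<in> tidx D (K1 \<union> K2)"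
    show "(\<lambda>(y1, y2). join K1 y1 y2) (restrict x K1, restrict x K2) = x"
    proof
      fix n show "(\<lambda>(y1, y2). join K1 y1 y2) (restrict x K1, restrict x K2) n = x n"
        using x unfolding tidx_def join_def restrict_def by (cases "n \<in> K1 \<union> K2") (auto simp: PiE_def extensional_def)
    qed
  qed
  show "(\<lambda>(y1, y2). join K1 y1 y2) ` (tidx D K1 \<times> tidx D K2) \<subseteq> tidx D (K1 \<union> K2)"
  proof
    fix p assume "p \<in> (\<lambda>(y1, y2). join K1 y1 y2) ` (tidx D K1 \<times> tidx D K2)"
    then obtain y1 y2 where "y1 \<in> tidx D K1" "y2 \<in> tidx D K2" "p = join K1 y1 y2" by auto
    thus "p \<in> tidx D (K1 \<union> K2)" using join_tidx by simp
  qed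
  show "(\<lambda>x. (restrict x K1, restrict x K2)) ` tidx D (K1 \<union> K2) \<subseteq> tidx D K1 \<times> tidx D K2"
  proof
    fix p assume "p \<in> (\<lambda>x. (restrict x K1, restrict x K2)) ` tidx D (K1 \<union> K2)"
    then obtain x where x: "x \<in> tidx D (K1 \<union> K2)" "p = (restrict x K1, restrict x K2)" by auto
    have "restrict x K1 \<in> tidx D K1" by (rule restrict_tidx[OF x(1)]) auto
    moreover have "restrict x K2 \<in> tidx D K2" by (rule restrict_tidx[OF x(1)]) auto
    ultimately show "p \<in> tidx D K1 \<times> tidx D K2" using x(2) by simp
  qed
qed

lemma sum_tidx_split:
  assumes "K1 \<inter> K2 = {}"
  shows "(\<Sum>x\<in>tidx D (K1 \<union> K2). f x) = (\<Sum>y1\<in>tidx D K1. \<Sum>y2\<in>tidx D K2. f (join K1 y1 y2))"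
proof -
  have "(\<Sum>x\<in>tidx D (K1 \<union> K2). f x) = (\<Sum>p\<in>tidx D K1 \<times> tidx D K2. f ((\<lambda>(y1, y2). join K1 y1 y2) p))"
    using sum.reindex_bij_betw[OF bij_join[OF assms, of D], of f] by (simp add: case_prod_beta)
  also have "\<dots> = (\<Sum>y1\<in>tidx D K1. \<Sum>y2\<in>tidx D K2. f (join K1 y1 y2))"
    by (simp add: sum.cartesian_product case_prod_beta)
  finally show ?thesis .
qed

lemma sum_tidx_cols:
  assumes "K \<subseteq> U"
  shows "(\<Sum>x\<in>tidx D U. f x) = (\<Sum>z\<in>tidx D (U - K). \<Sum>y\<in>tidx D K. f (join K y z))"
proof -
  have U: "U = K \<union> (U - K)" using assms by auto
  have "(\<Sum>x\<in>tidx D U. f x) = (\<Sum>y\<in>tidx D K. \<Sum>z\<in>tidx D (U - K). f (join K y z))"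
    by (subst U) (rule sum_tidx_split, auto)
  also have "\<dots> = (\<Sum>z\<in>tidx D (U - K). \<Sum>y\<in>tidx D K. f (join K y z))" by (rule sum.swap)
  finally show ?thesis .
qed

definition nrm :: "(nat \<Rightarrow> nat) \<Rightarrow> nat set \<Rightarrow> ((nat \<Rightarrow> nat) \<Rightarrow> real) \<Rightarrow> real" where
  "nrm D U T = (\<Sum>x\<in>tidx D U. (T x)^2)"

definition Pj :: "(nat \<Rightarrow> nat) \<Rightarrow> nat set \<Rightarrow> nat \<Rightarrow> (nat \<Rightarrow> (nat \<Rightarrow> nat) \<Rightarrow> real) \<Rightarrow> ((nat \<Rightarrow> nat) \<Rightarrow> real) \<Rightarrow> (nat \<Rightarrow> nat) \<Rightarrow> real" where
  "Pj D K k w T = (\<lambda>x. \<Sum>r<k. w r (restrict x K) * (\<Sum>y\<in>tidx D K. w r y * T (join K y x)))"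

lemma Pj_col:
  assumes "y0 \<in> tidx D K"
  shows "Pj D K k w T (join K y0 z) = prj (tidx D K) w k (\<lambda>y. T (join K y z)) y0"
  unfolding Pj_def prj_def ip_def join_restrict[OF assms] join_join1
  by (simp add: mult.commute)

lemma nrm_cols:
  assumes "K \<subseteq> U"
  shows "nrm D U T = (\<Sum>z\<in>tidx D (U - K). ip (tidx D K) (\<lambda>y. T (join K y z)) (\<lambda>y. T (join K y z)))"
  unfolding nrm_def ip_def sum_tidx_cols[OF assms] by (simp add: power2_eq_square)

definition Eok :: "(nat \<Rightarrow> nat) \<Rightarrow> nat set \<Rightarrow> ((nat \<Rightarrow> nat) \<Rightarrow> real) \<Rightarrow> (((nat \<Rightarrow> nat) \<Rightarrow> real) \<Rightarrow> (nat \<Rightarrow> nat) \<Rightarrow> real) \<Rightarrow> real \<Rightarrow> bool" where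
  "Eok D U A op S \<longleftrightarrow> (\<forall>B. nrm D U (\<lambda>x. A x - op B x) \<le> S + nrm D U (\<lambda>x. A x - B x))"

lemma Eok_comp:
  assumes "Eok D U A f S1" "Eok D U A g S2"
  shows "Eok D U A (\<lambda>B. f (g B)) (S1 + S2)"
  unfolding Eok_def
proof
  fix B
  have "nrm D U (\<lambda>x. A x - f (g B) x) \<le> S1 + nrm D U (\<lambda>x. A x - g B x)" using assms(1) unfolding Eok_def by blast
  also have "\<dots> \<le> S1 + (S2 + nrm D U (\<lambda>x. A x - B x))" using assms(2) unfolding Eok_def by simp
  finally show "nrm D U (\<lambda>x. A x - f (g B) x) \<le> S1 + S2 + nrm D U (\<lambda>x. A x - B x)" by simp
qed

lemma Eok_id: "Eok D U A (\<lambda>B. B) 0"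
  unfolding Eok_def by simp

lemma Eok_cong:
  assumes "Eok D U A f S" "\<And>B x. x \<in> tidx D U \<Longrightarrow> g B x = f B x" "S \<le> S'"
  shows "Eok D U A g S'"
proof -
  have eq: "nrm D U (\<lambda>x. A x - g B x) = nrm D U (\<lambda>x. A x - f B x)" for B
    unfolding nrm_def using assms(2) by (intro sum.cong) auto
  show ?thesis unfolding Eok_def
  proof
    fix B
    have "nrm D U (\<lambda>x. A x - f B x) \<le> S + nrm D U (\<lambda>x. A x - B x)" using assms(1) unfolding Eok_def by blast
    thus "nrm D U (\<lambda>x. A x - g B x) \<le> S' + nrm D U (\<lambda>x. A x - B x)" using assms(3) eq[of B] by linarith
  qed
qed

lemma Eok_Pj:
  assumes "K \<subseteq> U" "orthn (tidx D K) w k"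
  shows "Eok D U A (Pj D K k w) (nrm D U (\<lambda>x. A x - Pj D K k w A x))"
  unfolding Eok_def
proof
  fix B :: "(nat \<Rightarrow> nat) \<Rightarrow> real"
  let ?S = "tidx D K"
  let ?a = "\<lambda>z y. A (join K y z)" and ?b = "\<lambda>z y. B (join K y z)"
  have "nrm D U (\<lambda>x. A x - Pj D K k w B x)
      = (\<Sum>z\<in>tidx D (U - K). ip ?S (\<lambda>y. ?a z y - prj ?S w k (?b z) y) (\<lambda>y. ?a z y - prj ?S w k (?b z) y))"
    unfolding nrm_cols[OF assms(1)] by (intro sum.cong refl ip_cong) (auto simp: Pj_col)
  also have "\<dots> \<le> (\<Sum>z\<in>tidx D (U - K). ip ?S (\<lambda>y. ?a z y - prj ?S w k (?a z) y) (\<lambda>y. ?a z y - prj ?S w k (?a z) y)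
        + ip ?S (\<lambda>y. ?a z y - ?b z y) (\<lambda>y. ?a z y - ?b z y))"
    by (intro sum_mono E_prj[OF assms(2)])
  also have "\<dots> = nrm D U (\<lambda>x. A x - Pj D K k w A x) + nrm D U (\<lambda>x. A x - B x)"
    unfolding nrm_cols[OF assms(1)] sum.distrib by (intro arg_cong2[where f="(+)"] sum.cong refl ip_cong) (auto simp: Pj_col)
  finally show "nrm D U (\<lambda>x. A x - Pj D K k w B x) \<le> nrm D U (\<lambda>x. A x - Pj D K k w A x) + nrm D U (\<lambda>x. A x - B x)" .
qed



lemma orthn_mono: "orthn S w m \<Longrightarrow> k \<le> m \<Longrightarrow> orthn S w k"
  unfolding orthn_def by auto

lemma svd_facts:
  assumes "is_svd Rs Cs M \<sigma> u v"
  defines "m \<equiv> min (card Rs) (card Cs)"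
  shows "orthn Rs u m" "orthn Cs v m" "\<forall>d<m. 0 \<le> \<sigma> d" "\<forall>d. Suc d < m \<longrightarrow> \<sigma> (Suc d) \<le> \<sigma> d"
    "\<And>r c. r \<in> Rs \<Longrightarrow> c \<in> Cs \<Longrightarrow> M r c = (\<Sum>d<m. \<sigma> d * u d r * v d c)"
  using assms unfolding is_svd_def Let_def orthn_def ip_def by auto

lemma tail_nrm:
  assumes KU: "K \<subseteq> U"
    and svd: "is_svd (tidx D K) (tidx D (U - K)) (matricize A K) \<sigma> u v"
    and k: "k \<le> min (card (tidx D K)) (card (tidx D (U - K)))"
  shows "nrm D U (\<lambda>x. A x - Pj D K k u A x) = (\<Sum>d\<in>{k..<min (card (tidx D K)) (card (tidx D (U - K)))}. (\<sigma> d)^2)"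
proof -
  define Rs where "Rs = tidx D K"
  define Cs where "Cs = tidx D (U - K)"
  define m where "m = min (card Rs) (card Cs)"
  have ou: "orthn Rs u m" and ov: "orthn Cs v m"
    and dec: "\<And>r c. r \<in> Rs \<Longrightarrow> c \<in> Cs \<Longrightarrow> A (join K r c) = (\<Sum>d<m. \<sigma> d * u d r * v d c)"
    using svd_facts[OF svd] unfolding Rs_def Cs_def m_def matricize_def join_def by auto
  have ouk: "orthn Rs u k" using orthn_mono[OF ou] k unfolding m_def Rs_def Cs_def by simp
  define a where "a = (\<lambda>z y. A (join K y z))"
  have ipa: "ip Rs (a z) (u d) = \<sigma> d * v d z" if z: "z \<in> Cs" and d: "d < m" for z d
  proof -
    have "ip Rs (a z) (u d) = ip Rs (\<lambda>y. \<Sum>d'<m. (\<sigma> d' * v d' z) * u d' y) (u d)"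
      unfolding a_def using dec z by (intro ip_cong) (auto simp: mult.commute mult.left_commute)
    also have "\<dots> = (\<Sum>d'<m. (\<sigma> d' * v d' z) * ip Rs (u d') (u d))" by (simp add: ip_sum ip_scale)
    also have "\<dots> = (\<Sum>d'<m. if d' = d then \<sigma> d' * v d' z else 0)"
      using ou d unfolding orthn_def by (intro sum.cong) auto
    also have "\<dots> = \<sigma> d * v d z" using d by simp
    finally show ?thesis .
  qed
  have col: "ip Rs (\<lambda>y. a z y - prj Rs u k (a z) y) (\<lambda>y. a z y - prj Rs u k (a z) y)
        = (\<Sum>d\<in>{k..<m}. (\<sigma> d)^2 * (v d z)^2)" if z: "z \<in> Cs" for z
  proof -
    have pa: "prj Rs u m (a z) y = a z y" if y: "y \<in> Rs" for y
    proof -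
      have "prj Rs u m (a z) y = (\<Sum>d<m. \<sigma> d * v d z * u d y)" unfolding prj_def using ipa z by simp
      also have "\<dots> = a z y" unfolding a_def using dec[OF y z] by (simp add: mult.commute mult.left_commute)
      finally show ?thesis .
    qed
    have "ip Rs (a z) (a z) = ip Rs (prj Rs u m (a z)) (prj Rs u m (a z))"
      using pa by (intro ip_cong) auto
    also have "\<dots> = (\<Sum>d<m. (\<sigma> d * v d z)^2)" unfolding ip_prj_prj[OF ou] using ipa z by (simp add: power2_eq_square)
    finally have n: "ip Rs (a z) (a z) = (\<Sum>d<m. (\<sigma> d)^2 * (v d z)^2)" by (simp add: power_mult_distrib)
    have km: "k \<le> m" using k unfolding m_def Rs_def Cs_def by simp
    have "(\<Sum>d<k. (ip Rs (a z) (u d))^2) = (\<Sum>d<k. (\<sigma> d)^2 * (v d z)^2)"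
      using ipa z km by (intro sum.cong) (auto simp: power_mult_distrib)
    moreover have "(\<Sum>d<m. (\<sigma> d)^2 * (v d z)^2) = (\<Sum>d<k. (\<sigma> d)^2 * (v d z)^2) + (\<Sum>d\<in>{k..<m}. (\<sigma> d)^2 * (v d z)^2)"
    proof -
      have "{..<m} = {..<k} \<union> {k..<m}" using km by auto
      thus ?thesis by (simp add: sum.union_disjoint[of "{..<k}" "{k..<m}"] ivl_disj_int)
    qed
    ultimately show ?thesis unfolding res_nsq[OF ouk] n by simp
  qed
  have "nrm D U (\<lambda>x. A x - Pj D K k u A x) = (\<Sum>z\<in>Cs. ip Rs (\<lambda>y. a z y - prj Rs u k (a z) y) (\<lambda>y. a z y - prj Rs u k (a z) y))"
    unfolding nrm_cols[OF KU] Rs_def[symmetric] Cs_def[symmetric]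
    by (intro sum.cong refl ip_cong) (auto simp: Pj_col Rs_def a_def)
  also have "\<dots> = (\<Sum>z\<in>Cs. \<Sum>d\<in>{k..<m}. (\<sigma> d)^2 * (v d z)^2)" using col by simp
  also have "\<dots> = (\<Sum>d\<in>{k..<m}. (\<sigma> d)^2 * (\<Sum>z\<in>Cs. (v d z)^2))" by (subst sum.swap) (simp add: sum_distrib_left)
  also have "\<dots> = (\<Sum>d\<in>{k..<m}. (\<sigma> d)^2)"
    using ov unfolding orthn_def ip_def by (intro sum.cong) (auto simp: power2_eq_square)
  finally show ?thesis unfolding m_def Rs_def Cs_def .
qed



definition blk :: "nat \<Rightarrow> nat \<Rightarrow> nat set" where
  "blk l n = {2^l * (n - 1) + 1 .. 2^l * n}"

lemma blk_children:
  assumes "n \<ge> 1"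
  shows "blk l (2 * n - 1) \<union> blk l (2 * n) = blk (Suc l) n"
    and "blk l (2 * n - 1) \<inter> blk l (2 * n) = {}"
proof -
  obtain n' where n: "n = Suc n'" using assms by (cases n) auto
  have e1: "2 * n - 1 - 1 = 2 * n'" and e2: "2 * n - 1 = 2 * n' + 1" and e3: "2 * n = 2 * n' + 2" using n by auto
  have a: "blk l (2 * n - 1) = {2^l * (2 * n') + 1 .. 2^l * (2 * n' + 1)}"
    unfolding blk_def e1 e2 by simp
  have b: "blk l (2 * n) = {2^l * (2 * n' + 1) + 1 .. 2^l * (2 * n' + 2)}"
    unfolding blk_def e3 by (simp add: numeral_eq_Suc)
  have c: "blk (Suc l) n = {2^l * (2 * n') + 1 .. 2^l * (2 * n' + 2)}"
    unfolding blk_def n by (simp add: algebra_simps)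
  have m1: "2^l * (2 * n') \<le> 2^l * (2 * n' + 1)" and m2: "2^l * (2 * n' + 1) \<le> (2::nat)^l * (2 * n' + 2)" by auto
  show "blk l (2 * n - 1) \<union> blk l (2 * n) = blk (Suc l) n"
    unfolding a b c using m1 m2 by auto
  show "blk l (2 * n - 1) \<inter> blk l (2 * n) = {}"
    unfolding a b by auto
qed

lemma blk0: "n \<ge> 1 \<Longrightarrow> blk 0 n = {n}"
  unfolding blk_def by auto

lemma blk_sub:
  assumes "1 \<le> n" "n \<le> 2^(L - l)" "l \<le> L"
  shows "blk l n \<subseteq> {1..2^L}"
proof -
  have "2^l * n \<le> 2^l * 2^(L - l)" using assms by simp
  also have "\<dots> = (2::nat)^L" using assms(3) by (simp add: power_add[symmetric])
  finally show ?thesis unfolding blk_def by auto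
qed

lemma blk_canon:
  assumes "1 \<le> n" "n \<le> 2^(L - l)" "l \<le> L"
  shows "blk l n \<in> canonical_parts L"
  unfolding canonical_parts_def blk_def using assms
  by (intro CollectI exI[of _ "L - l"] exI[of _ n]) auto

lemma blk_top: "L \<ge> 1 \<Longrightarrow> blk (L - 1) 1 \<union> blk (L - 1) 2 = {1..2^L}"
  using blk_children(1)[of 1 "L - 1"] by (simp add: blk_def)

lemma blk_top_disj: "blk (L - 1) 1 \<inter> blk (L - 1) 2 = {}"
  using blk_children(2)[of 1 "L - 1"] by simp



type_synonym fam = "nat \<Rightarrow> nat \<Rightarrow> nat \<Rightarrow> (nat \<Rightarrow> nat) \<Rightarrow> real"

definition vvf :: "fam \<Rightarrow> nat \<Rightarrow> nat \<Rightarrow> nat \<Rightarrow> real" where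
  "vvf uu n r k = uu 0 n r ((\<lambda>_. undefined)(n := k))"

fun aaf :: "(nat \<Rightarrow> nat) \<Rightarrow> fam \<Rightarrow> nat \<Rightarrow> nat \<Rightarrow> nat \<Rightarrow> nat \<Rightarrow> nat \<Rightarrow> real" where
  "aaf D uu 0 n r i j = 0"
| "aaf D uu (Suc l) n r i j = (\<Sum>y\<in>tidx D (blk (Suc l) n).
      uu l (2*n-1) i (restrict y (blk l (2*n-1))) * uu l (2*n) j (restrict y (blk l (2*n))) * uu (Suc l) n r y)"

definition Gf :: "(nat \<Rightarrow> nat) \<Rightarrow> nat \<Rightarrow> fam \<Rightarrow> nat \<Rightarrow> nat \<Rightarrow> (nat \<Rightarrow> nat) \<Rightarrow> (nat \<Rightarrow> nat) \<Rightarrow> real" where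
  "Gf D R uu l n x y = (\<Sum>r<R. tn_phi R (vvf uu) (aaf D uu) l n r x * uu l n r y)"

fun Gk :: "(nat \<Rightarrow> nat) \<Rightarrow> nat \<Rightarrow> fam \<Rightarrow> nat \<Rightarrow> nat \<Rightarrow> (nat \<Rightarrow> nat) \<Rightarrow> (nat \<Rightarrow> nat) \<Rightarrow> real" where
  "Gk D R uu 0 n x y = (if y = restrict x (blk 0 n) then 1 else 0)"
| "Gk D R uu (Suc l) n x y = Gf D R uu l (2*n-1) x (restrict y (blk l (2*n-1))) * Gf D R uu l (2*n) x (restrict y (blk l (2*n)))"

fun Mpf :: "(nat \<Rightarrow> nat) \<Rightarrow> fam \<Rightarrow> (nat \<Rightarrow> nat \<Rightarrow> nat) \<Rightarrow> nat \<Rightarrow> nat \<Rightarrow> ((nat \<Rightarrow> nat) \<Rightarrow> real) \<Rightarrow> (nat \<Rightarrow> nat) \<Rightarrow> real" where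
  "Mpf D uu kk 0 n T = T"
| "Mpf D uu kk (Suc l) n T = Mpf D uu kk l (2*n-1) (Pj D (blk l (2*n-1)) (kk l (2*n-1)) (uu l (2*n-1))
      (Mpf D uu kk l (2*n) (Pj D (blk l (2*n)) (kk l (2*n)) (uu l (2*n)) T)))"

lemma blk_child_sub:
  assumes "n \<ge> 1"
  shows "blk l (2*n-1) \<subseteq> blk (Suc l) n" "blk l (2*n) \<subseteq> blk (Suc l) n"
  using blk_children(1)[OF assms, of l] by auto

lemma phi_loc:
  assumes "n \<ge> 1" "\<forall>i\<in>blk l n. x i = x' i"
  shows "tn_phi R v a l n r x = tn_phi R v a l n r x'"
  using assms
proof (induction l arbitrary: n r)
  case 0
  thus ?case using blk0[of n] by simp
next
  case (Suc l)
  have c1: "2*n-1 \<ge> 1" "2*n \<ge> 1" using Suc.prems by auto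
  have "\<forall>i\<in>blk l (2*n-1). x i = x' i" "\<forall>i\<in>blk l (2*n). x i = x' i"
    using Suc.prems blk_child_sub[OF Suc.prems(1), of l] by auto
  hence "tn_phi R v a l (2*n-1) i x = tn_phi R v a l (2*n-1) i x'"
        "tn_phi R v a l (2*n) i x = tn_phi R v a l (2*n) i x'" for i
    using Suc.IH c1 by auto
  thus ?case by simp
qed

lemma Gf_loc:
  assumes "n \<ge> 1" "\<forall>i\<in>blk l n. x i = x' i"
  shows "Gf D R uu l n x y = Gf D R uu l n x' y"
  unfolding Gf_def using phi_loc[OF assms] by simp

lemma Gk_loc:
  assumes "n \<ge> 1" "\<forall>i\<in>blk l n. x i = x' i"
  shows "Gk D R uu l n x y = Gk D R uu l n x' y"
proof (cases l)
  case 0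
  hence "restrict x (blk 0 n) = restrict x' (blk 0 n)" using assms by (auto simp: restrict_def)
  thus ?thesis using 0 by simp
next
  case (Suc l')
  have c1: "2*n-1 \<ge> 1" "2*n \<ge> 1" using assms by auto
  have "\<forall>i\<in>blk l' (2*n-1). x i = x' i" "\<forall>i\<in>blk l' (2*n). x i = x' i"
    using assms blk_child_sub[OF assms(1), of l'] Suc by auto
  hence "Gf D R uu l' (2*n-1) x z = Gf D R uu l' (2*n-1) x' z" "Gf D R uu l' (2*n) x z = Gf D R uu l' (2*n) x' z" for z
    using Gf_loc c1 by blast+
  thus ?thesis using Suc by simp
qed

lemma restrict_single: "restrict x {n} = (\<lambda>_. undefined)(n := x n)"
  by (auto simp: restrict_def)

lemma phi_G:
  assumes x: "x \<in> tidx D U" and n: "n \<ge> 1" and sub: "blk l n \<subseteq> U"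
  shows "tn_phi R (vvf uu) (aaf D uu) l n r x = (\<Sum>y\<in>tidx D (blk l n). Gk D R uu l n x y * uu l n r y)"
proof (cases l)
  case 0
  have rt: "restrict x (blk 0 n) \<in> tidx D (blk 0 n)" using restrict_tidx[OF x] sub 0 by simp
  have fin: "finite (tidx D (blk 0 n))" by (rule finite_tidx) (simp add: blk_def)
  have "(\<Sum>y\<in>tidx D (blk l n). Gk D R uu l n x y * uu l n r y)
      = (\<Sum>y\<in>tidx D (blk 0 n). if y = restrict x (blk 0 n) then uu 0 n r y else 0)"
    using 0 by (intro sum.cong) auto
  also have "\<dots> = uu 0 n r (restrict x (blk 0 n))" using rt fin by (simp add: sum.delta')
  also have "\<dots> = tn_phi R (vvf uu) (aaf D uu) 0 n r x"
    using blk0[OF n] by (simp add: vvf_def restrict_single)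
  finally show ?thesis using 0 by simp
next
  case (Suc l')
  define K where "K = blk (Suc l') n"
  define U1 where "U1 = (\<lambda>i y. uu l' (2*n-1) i (restrict y (blk l' (2*n-1))))"
  define U2 where "U2 = (\<lambda>j y. uu l' (2*n) j (restrict y (blk l' (2*n))))"
  define p1 where "p1 = (\<lambda>i. tn_phi R (vvf uu) (aaf D uu) l' (2*n-1) i x)"
  define p2 where "p2 = (\<lambda>j. tn_phi R (vvf uu) (aaf D uu) l' (2*n) j x)"
  have "tn_phi R (vvf uu) (aaf D uu) (Suc l') n r x
     = (\<Sum>i<R. \<Sum>j<R. (\<Sum>y\<in>tidx D K. U1 i y * U2 j y * uu (Suc l') n r y) * p1 i * p2 j)"
    unfolding K_def U1_def U2_def p1_def p2_def by simp
  also have "\<dots> = (\<Sum>i<R. \<Sum>j<R. \<Sum>y\<in>tidx D K. (p1 i * U1 i y) * (p2 j * U2 j y) * uu (Suc l') n r y)"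
    by (simp add: sum_distrib_left sum_distrib_right mult_ac)
  also have "\<dots> = (\<Sum>i<R. \<Sum>y\<in>tidx D K. \<Sum>j<R. (p1 i * U1 i y) * (p2 j * U2 j y) * uu (Suc l') n r y)"
    by (intro sum.cong refl) (rule sum.swap)
  also have "\<dots> = (\<Sum>y\<in>tidx D K. \<Sum>i<R. \<Sum>j<R. (p1 i * U1 i y) * (p2 j * U2 j y) * uu (Suc l') n r y)"
    by (rule sum.swap)
  also have "\<dots> = (\<Sum>y\<in>tidx D K. (\<Sum>i<R. p1 i * U1 i y) * (\<Sum>j<R. p2 j * U2 j y) * uu (Suc l') n r y)"
    by (intro sum.cong refl) (simp only: sum_product, simp only: sum_distrib_right)
  also have "\<dots> = (\<Sum>y\<in>tidx D (blk l n). Gk D R uu l n x y * uu l n r y)"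
    unfolding Suc K_def U1_def U2_def p1_def p2_def by (simp add: Gf_def)
  finally show ?thesis using Suc by simp
qed

lemma join_restrict2:
  assumes "y2 \<in> tidx D K2" "K1 \<inter> K2 = {}"
  shows "restrict (join K1 y1 y2) K2 = y2"
proof
  fix i show "restrict (join K1 y1 y2) K2 i = y2 i"
    using assms unfolding tidx_def join_def restrict_def by (cases "i \<in> K2") (auto simp: PiE_def extensional_def)
qed

lemma join_in_U: "y \<in> tidx D K \<Longrightarrow> K \<subseteq> U \<Longrightarrow> x \<in> tidx D U \<Longrightarrow> join K y x \<in> tidx D U"
  using join_tidx[of y D K x U] by (simp add: Un_absorb1)

lemma kern_full:
  assumes x: "x \<in> tidx D U" and m: "m \<ge> 1" and sub: "blk l m \<subseteq> U"
    and Z: "\<forall>l m r y. kk l m \<le> r \<longrightarrow> uu l m r y = 0" and KR: "\<forall>l m. kk l m \<le> R"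
    and IH: "\<forall>T x. x \<in> tidx D U \<longrightarrow> Mpf D uu kk l m T x = (\<Sum>y\<in>tidx D (blk l m). Gk D R uu l m x y * T (join (blk l m) y x))"
  shows "Mpf D uu kk l m (Pj D (blk l m) (kk l m) (uu l m) T) x = (\<Sum>y'\<in>tidx D (blk l m). Gf D R uu l m x y' * T (join (blk l m) y' x))"
proof -
  define K where "K = blk l m"
  define k where "k = kk l m"
  define u where "u = uu l m"
  define ph where "ph = (\<lambda>r. tn_phi R (vvf uu) (aaf D uu) l m r x)"
  define c where "c = (\<lambda>r. (\<Sum>y'\<in>tidx D K. u r y' * T (join K y' x)))"
  have "Mpf D uu kk l m (Pj D K k u T) x = (\<Sum>y\<in>tidx D K. Gk D R uu l m x y * Pj D K k u T (join K y x))"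
    using IH x unfolding K_def by blast
  also have "\<dots> = (\<Sum>y\<in>tidx D K. Gk D R uu l m x y * (\<Sum>r<k. u r y * c r))"
    unfolding Pj_def c_def by (intro sum.cong refl) (simp add: join_restrict join_join1)
  also have "\<dots> = (\<Sum>r<k. (\<Sum>y\<in>tidx D K. Gk D R uu l m x y * u r y) * c r)"
    by (simp add: sum_distrib_left sum_distrib_right mult_ac sum.swap[of _ "{..<k}"])
  also have "\<dots> = (\<Sum>r<k. ph r * c r)"
    unfolding ph_def u_def K_def using phi_G[OF x m sub] by simp
  also have "\<dots> = (\<Sum>y'\<in>tidx D K. (\<Sum>r<k. ph r * u r y') * T (join K y' x))"
    unfolding c_def by (simp add: sum_distrib_left sum_distrib_right mult_ac sum.swap[of _ "tidx D K"])
  also have "\<dots> = (\<Sum>y'\<in>tidx D K. Gf D R uu l m x y' * T (join K y' x))"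
  proof (intro sum.cong refl)
    fix y'
    have "(\<Sum>r<R. ph r * u r y') = (\<Sum>r<k. ph r * u r y') + (\<Sum>r\<in>{k..<R}. ph r * u r y')"
    proof -
      have "{..<R} = {..<k} \<union> {k..<R}" using KR[rule_format, of l m] unfolding k_def by auto
      thus ?thesis by (simp add: sum.union_disjoint[of "{..<k}" "{k..<R}"] ivl_disj_int)
    qed
    moreover have "(\<Sum>r\<in>{k..<R}. ph r * u r y') = 0" using Z unfolding u_def k_def by simp
    ultimately show "(\<Sum>r<k. ph r * u r y') * T (join K y' x) = Gf D R uu l m x y' * T (join K y' x)"
      unfolding Gf_def ph_def u_def by simp
  qed
  finally show ?thesis unfolding K_def k_def u_def .
qed

lemma join_join2:
  assumes "K1 \<inter> K2 = {}"
  shows "join K2 y2 (join K1 y1 x) = join (K1 \<union> K2) (join K1 y1 y2) x"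
  using assms unfolding join_def by (auto simp: fun_eq_iff)

lemma kern:
  assumes Z: "\<forall>l m r y. kk l m \<le> r \<longrightarrow> uu l m r y = 0" and KR: "\<forall>l m. kk l m \<le> R"
  shows "x \<in> tidx D U \<Longrightarrow> n \<ge> 1 \<Longrightarrow> blk l n \<subseteq> U \<Longrightarrow>
    Mpf D uu kk l n T x = (\<Sum>y\<in>tidx D (blk l n). Gk D R uu l n x y * T (join (blk l n) y x))"
proof (induction l arbitrary: n T x)
  case 0
  have rt: "restrict x (blk 0 n) \<in> tidx D (blk 0 n)" using restrict_tidx[OF 0(1)] 0(3) by simp
  have fin: "finite (tidx D (blk 0 n))" by (rule finite_tidx) (simp add: blk_def)
  have "(\<Sum>y\<in>tidx D (blk 0 n). Gk D R uu 0 n x y * T (join (blk 0 n) y x))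
      = (\<Sum>y\<in>tidx D (blk 0 n). if y = restrict x (blk 0 n) then T (join (blk 0 n) y x) else 0)"
    by (intro sum.cong) auto
  also have "\<dots> = T x" using rt fin by (simp add: sum.delta' join_restrict_self)
  finally show ?case by simp
next
  case (Suc l)
  note x = Suc.prems(1) and n = Suc.prems(2) and sub = Suc.prems(3)
  define K where "K = blk (Suc l) n"
  define K1 where "K1 = blk l (2*n-1)"
  define K2 where "K2 = blk l (2*n)"
  have KK: "K = K1 \<union> K2" and dj: "K1 \<inter> K2 = {}" using blk_children[OF n, of l] unfolding K_def K1_def K2_def by auto
  have s1: "K1 \<subseteq> U" and s2: "K2 \<subseteq> U" using sub KK unfolding K_def by auto
  have n1: "2*n-1 \<ge> 1" and n2: "2*n \<ge> 1" using n by auto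
  define T1 where "T1 = Mpf D uu kk l (2*n) (Pj D K2 (kk l (2*n)) (uu l (2*n)) T)"
  have IH1: "\<forall>T x. x \<in> tidx D U \<longrightarrow> Mpf D uu kk l (2*n-1) T x = (\<Sum>y\<in>tidx D (blk l (2*n-1)). Gk D R uu l (2*n-1) x y * T (join (blk l (2*n-1)) y x))"
    using Suc.IH n1 s1 unfolding K1_def by blast
  have IH2: "\<forall>T x. x \<in> tidx D U \<longrightarrow> Mpf D uu kk l (2*n) T x = (\<Sum>y\<in>tidx D (blk l (2*n)). Gk D R uu l (2*n) x y * T (join (blk l (2*n)) y x))"
    using Suc.IH n2 s2 unfolding K2_def by blast
  have T1z: "T1 z = (\<Sum>y2\<in>tidx D K2. Gf D R uu l (2*n) z y2 * T (join K2 y2 z))" if "z \<in> tidx D U" for z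
    unfolding T1_def K2_def using kern_full[OF that n2 s2[unfolded K2_def] Z KR IH2] .
  have "Mpf D uu kk (Suc l) n T x = Mpf D uu kk l (2*n-1) (Pj D K1 (kk l (2*n-1)) (uu l (2*n-1)) T1) x"
    unfolding T1_def K1_def K2_def by simp
  also have "\<dots> = (\<Sum>y1\<in>tidx D K1. Gf D R uu l (2*n-1) x y1 * T1 (join K1 y1 x))"
    unfolding K1_def using kern_full[OF x n1 s1[unfolded K1_def] Z KR IH1] .
  also have "\<dots> = (\<Sum>y1\<in>tidx D K1. \<Sum>y2\<in>tidx D K2. Gk D R uu (Suc l) n x (join K1 y1 y2) * T (join K (join K1 y1 y2) x))"
  proof (intro sum.cong refl)
    fix y1 assume y1: "y1 \<in> tidx D K1"
    have z: "join K1 y1 x \<in> tidx D U" by (rule join_in_U[OF y1 s1 x])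
    have loc: "Gf D R uu l (2*n) (join K1 y1 x) y2 = Gf D R uu l (2*n) x y2" for y2
      by (rule Gf_loc[OF n2]) (use dj in \<open>auto simp: join_def K2_def\<close>)
    show "Gf D R uu l (2*n-1) x y1 * T1 (join K1 y1 x) = (\<Sum>y2\<in>tidx D K2. Gk D R uu (Suc l) n x (join K1 y1 y2) * T (join K (join K1 y1 y2) x))"
      unfolding T1z[OF z] sum_distrib_left
    proof (intro sum.cong refl)
      fix y2 assume y2: "y2 \<in> tidx D K2"
      have "Gk D R uu (Suc l) n x (join K1 y1 y2) = Gf D R uu l (2*n-1) x y1 * Gf D R uu l (2*n) x y2"
        using join_restrict[OF y1] join_restrict2[OF y2 dj] unfolding K1_def K2_def by simp
      moreover have "join K2 y2 (join K1 y1 x) = join K (join K1 y1 y2) x" unfolding KK by (rule join_join2[OF dj])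
      ultimately show "Gf D R uu l (2*n-1) x y1 * (Gf D R uu l (2*n) (join K1 y1 x) y2 * T (join K2 y2 (join K1 y1 x)))
          = Gk D R uu (Suc l) n x (join K1 y1 y2) * T (join K (join K1 y1 y2) x)"
        using loc by simp
    qed
  qed
  also have "\<dots> = (\<Sum>y\<in>tidx D K. Gk D R uu (Suc l) n x y * T (join K y x))"
    unfolding KK by (rule sum_tidx_split[OF dj, symmetric])
  finally show ?case unfolding K_def .
qed



lemma Eok_Mpf:
  assumes tau: "\<tau> \<ge> 0"
    and PjOK: "\<forall>l' m. l' < l \<longrightarrow> 1 \<le> m \<longrightarrow> m \<le> 2^(L - l') \<longrightarrow> Eok D U A (Pj D (blk l' m) (kk l' m) (uu l' m)) \<tau>"
  shows "1 \<le> n \<Longrightarrow> n \<le> 2^(L - l) \<Longrightarrow> l \<le> L \<Longrightarrow> Eok D U A (Mpf D uu kk l n) ((2 * 2^l - 2) * \<tau>)"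
  using PjOK
proof (induction l arbitrary: n)
  case 0
  have "Mpf D uu kk 0 n = (\<lambda>B. B)" by (rule ext) simp
  thus ?case using Eok_id by simp
next
  case (Suc l)
  have n1: "1 \<le> 2*n-1" "1 \<le> 2*n" using Suc.prems by auto
  have "2 * n \<le> 2 * 2^(L - Suc l)" using Suc.prems by simp
  also have "\<dots> = 2^(L - l)"
  proof -
    have "L - l = Suc (L - Suc l)" using Suc.prems(3) by simp
    thus ?thesis by simp
  qed
  finally have n2: "2*n \<le> 2^(L - l)" "2*n-1 \<le> 2^(L - l)" by auto
  have P: "\<forall>l' m. l' < l \<longrightarrow> 1 \<le> m \<longrightarrow> m \<le> 2^(L - l') \<longrightarrow> Eok D U A (Pj D (blk l' m) (kk l' m) (uu l' m)) \<tau>"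
    using Suc.prems(4) less_SucI by blast
  have E1: "Eok D U A (Mpf D uu kk l (2*n-1)) ((2 * 2^l - 2) * \<tau>)" using Suc.IH[OF n1(1) n2(2) _ P] Suc.prems(3) by simp
  have E2: "Eok D U A (Mpf D uu kk l (2*n)) ((2 * 2^l - 2) * \<tau>)" using Suc.IH[OF n1(2) n2(1) _ P] Suc.prems(3) by simp
  have P1: "Eok D U A (Pj D (blk l (2*n-1)) (kk l (2*n-1)) (uu l (2*n-1))) \<tau>" using Suc.prems(4)[rule_format, of l "2*n-1"] n1 n2 by simp
  have P2: "Eok D U A (Pj D (blk l (2*n)) (kk l (2*n)) (uu l (2*n))) \<tau>" using Suc.prems(4)[rule_format, of l "2*n"] n1 n2 by simp
  have "Eok D U A (\<lambda>B. Mpf D uu kk l (2*n-1) (Pj D (blk l (2*n-1)) (kk l (2*n-1)) (uu l (2*n-1))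
      (Mpf D uu kk l (2*n) (Pj D (blk l (2*n)) (kk l (2*n)) (uu l (2*n)) B))))
      ((2 * 2^l - 2) * \<tau> + (\<tau> + ((2 * 2^l - 2) * \<tau> + \<tau>)))"
    using Eok_comp[OF E1 Eok_comp[OF P1 Eok_comp[OF E2 P2]]] by simp
  moreover have "(2 * 2^l - 2) * \<tau> + (\<tau> + ((2 * 2^l - 2) * \<tau> + \<tau>)) = (2 * 2^Suc l - 2) * \<tau>"
    by (simp add: algebra_simps)
  moreover have "Mpf D uu kk (Suc l) n = (\<lambda>B. Mpf D uu kk l (2*n-1) (Pj D (blk l (2*n-1)) (kk l (2*n-1)) (uu l (2*n-1))
      (Mpf D uu kk l (2*n) (Pj D (blk l (2*n)) (kk l (2*n)) (uu l (2*n)) B))))" by (rule ext) simp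
  ultimately show ?case by simp
qed

lemma svd_ip:
  assumes svd: "is_svd (tidx D K) (tidx D (U - K)) (matricize A K) \<sigma> u v"
    and z: "z \<in> tidx D (U - K)" and d: "d < min (card (tidx D K)) (card (tidx D (U - K)))"
  shows "(\<Sum>y\<in>tidx D K. u d y * A (join K y z)) = \<sigma> d * v d z"
proof -
  define Rs where "Rs = tidx D K"
  define Cs where "Cs = tidx D (U - K)"
  define m where "m = min (card Rs) (card Cs)"
  have ou: "orthn Rs u m"
    and dec: "\<And>r c. r \<in> Rs \<Longrightarrow> c \<in> Cs \<Longrightarrow> A (join K r c) = (\<Sum>d<m. \<sigma> d * u d r * v d c)"
    using svd_facts[OF svd] unfolding Rs_def Cs_def m_def matricize_def join_def by auto
  have "(\<Sum>y\<in>Rs. u d y * A (join K y z)) = ip Rs (\<lambda>y. \<Sum>d'<m. (\<sigma> d' * v d' z) * u d' y) (u d)"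
    unfolding ip_def using dec z unfolding Cs_def by (intro sum.cong) (auto simp: mult_ac)
  also have "\<dots> = (\<Sum>d'<m. (\<sigma> d' * v d' z) * ip Rs (u d') (u d))" by (simp add: ip_sum ip_scale)
  also have "\<dots> = (\<Sum>d'<m. if d' = d then \<sigma> d' * v d' z else 0)"
    using ou d unfolding orthn_def m_def Rs_def Cs_def by (intro sum.cong) auto
  also have "\<dots> = \<sigma> d * v d z" using d unfolding m_def Rs_def Cs_def by simp
  finally show ?thesis unfolding Rs_def .
qed



lemma root_eq:
  assumes L: "L \<ge> 1" and x: "x \<in> tidx D {1..2^L}"
    and Z: "\<forall>l m r y. kk l m \<le> r \<longrightarrow> uu l m r y = 0" and KR: "\<forall>l m. kk l m \<le> R"
    and svd: "is_svd (tidx D (blk (L-1) 1)) (tidx D ({1..2^L} - blk (L-1) 1)) (matricize A (blk (L-1) 1)) \<sigma> u v"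
    and k1m: "k1 \<le> min (card (tidx D (blk (L-1) 1))) (card (tidx D ({1..2^L} - blk (L-1) 1)))"
    and k1R: "k1 \<le> R"
    and u1: "\<forall>r y. uu (L-1) 1 r y = (if r < k1 then u r y else 0)"
    and u2: "\<forall>r y. uu (L-1) 2 r y = (if r < k1 then v r y else 0)"
  shows "tn_W R (vvf uu) (aaf D uu) (\<lambda>i j. if i = j \<and> i < k1 then \<sigma> i else 0) L x
       = Mpf D uu kk (L-1) 1 (Mpf D uu kk (L-1) 2 (Pj D (blk (L-1) 1) k1 (uu (L-1) 1) A)) x"
proof -
  define U where "U = {1..(2::nat)^L}"
  define K1 where "K1 = blk (L-1) 1"
  define K2 where "K2 = blk (L-1) 2"
  have UK: "U = K1 \<union> K2" unfolding U_def K1_def K2_def using blk_top[OF L] by simp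
  have dj: "K1 \<inter> K2 = {}" unfolding K1_def K2_def by (rule blk_top_disj)
  have UmK: "U - K1 = K2" using UK dj by auto
  have s1: "K1 \<subseteq> U" and s2: "K2 \<subseteq> U" using UK by auto
  have xU: "x \<in> tidx D U" using x unfolding U_def .
  define ph1 where "ph1 = (\<lambda>r. tn_phi R (vvf uu) (aaf D uu) (L-1) 1 r x)"
  define ph2 where "ph2 = (\<lambda>r. tn_phi R (vvf uu) (aaf D uu) (L-1) 2 r x)"
  define B where "B = Pj D K1 k1 (uu (L-1) 1) A"
  have lhs: "tn_W R (vvf uu) (aaf D uu) (\<lambda>i j. if i = j \<and> i < k1 then \<sigma> i else 0) L x = (\<Sum>r<k1. \<sigma> r * ph1 r * ph2 r)"
  proof -
    have "tn_W R (vvf uu) (aaf D uu) (\<lambda>i j. if i = j \<and> i < k1 then \<sigma> i else 0) L x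
        = (\<Sum>i<R. \<Sum>j<R. (if i = j \<and> i < k1 then \<sigma> i else 0) * ph1 i * ph2 j)"
      unfolding tn_W_def ph1_def ph2_def ..
    also have "\<dots> = (\<Sum>i<R. if i < k1 then \<sigma> i * ph1 i * ph2 i else 0)"
    proof (intro sum.cong refl)
      fix i assume i: "i \<in> {..<R}"
      have "(\<Sum>j<R. (if i = j \<and> i < k1 then \<sigma> i else 0) * ph1 i * ph2 j)
          = (\<Sum>j<R. if i = j then (if i < k1 then \<sigma> i * ph1 i * ph2 j else 0) else 0)"
        by (intro sum.cong) auto
      also have "\<dots> = (if i < k1 then \<sigma> i * ph1 i * ph2 i else 0)" using i by (simp add: sum.delta)
      finally show "(\<Sum>j<R. (if i = j \<and> i < k1 then \<sigma> i else 0) * ph1 i * ph2 j) = (if i < k1 then \<sigma> i * ph1 i * ph2 i else 0)" .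
    qed
    also have "\<dots> = (\<Sum>i\<in>{i \<in> {..<R}. i < k1}. \<sigma> i * ph1 i * ph2 i)" by (rule sum.inter_filter[symmetric]) simp
    also have "{i \<in> {..<R}. i < k1} = {..<k1}" using k1R by auto
    finally show ?thesis .
  qed
  have Bw: "B (join K2 y2 (join K1 y1 x)) = (\<Sum>r<k1. u r y1 * (\<sigma> r * v r y2))"
    if y1: "y1 \<in> tidx D K1" and y2: "y2 \<in> tidx D K2" for y1 y2
  proof -
    have r1: "restrict (join K2 y2 (join K1 y1 x)) K1 = y1"
      using y1 dj unfolding tidx_def join_def restrict_def by (auto simp: PiE_def extensional_def fun_eq_iff)
    have j1: "join K1 y (join K2 y2 (join K1 y1 x)) = join K1 y y2" for y
    proof
      fix i show "join K1 y (join K2 y2 (join K1 y1 x)) i = join K1 y y2 i"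
        using y2 xU UK unfolding tidx_def join_def by (cases "i \<in> U") (auto simp: PiE_def extensional_def)
    qed
    have y2C: "y2 \<in> tidx D ({1..2^L} - blk (L-1) 1)" using y2 UmK unfolding U_def K1_def by simp
    have "B (join K2 y2 (join K1 y1 x)) = (\<Sum>r<k1. uu (L-1) 1 r y1 * (\<Sum>y\<in>tidx D K1. uu (L-1) 1 r y * A (join K1 y y2)))"
      unfolding B_def Pj_def r1 j1 ..
    also have "\<dots> = (\<Sum>r<k1. u r y1 * (\<Sum>y\<in>tidx D K1. u r y * A (join K1 y y2)))"
      using u1 by simp
    also have "\<dots> = (\<Sum>r<k1. u r y1 * (\<sigma> r * v r y2))"
    proof (intro sum.cong refl)
      fix r assume "r \<in> {..<k1}"
      hence r: "r < min (card (tidx D (blk (L-1) 1))) (card (tidx D ({1..2^L} - blk (L-1) 1)))" using k1m by simp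
      show "u r y1 * (\<Sum>y\<in>tidx D K1. u r y * A (join K1 y y2)) = u r y1 * (\<sigma> r * v r y2)"
        using svd_ip[OF svd y2C r] unfolding K1_def by simp
    qed
    finally show ?thesis .
  qed
  have "Mpf D uu kk (L-1) 1 (Mpf D uu kk (L-1) 2 B) x
      = (\<Sum>y1\<in>tidx D K1. Gk D R uu (L-1) 1 x y1 * Mpf D uu kk (L-1) 2 B (join K1 y1 x))"
    using kern[OF Z KR xU _ s1[unfolded K1_def]] unfolding K1_def by simp
  also have "\<dots> = (\<Sum>y1\<in>tidx D K1. \<Sum>y2\<in>tidx D K2. \<Sum>r<k1.
       Gk D R uu (L-1) 1 x y1 * Gk D R uu (L-1) 2 x y2 * (u r y1 * (\<sigma> r * v r y2)))"
  proof (intro sum.cong refl)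
    fix y1 assume y1: "y1 \<in> tidx D K1"
    have z: "join K1 y1 x \<in> tidx D U" by (rule join_in_U[OF y1 s1 xU])
    have loc: "Gk D R uu (L-1) 2 (join K1 y1 x) y2 = Gk D R uu (L-1) 2 x y2" for y2
      by (rule Gk_loc) (use dj in \<open>auto simp: join_def K2_def\<close>)
    have "Mpf D uu kk (L-1) 2 B (join K1 y1 x) = (\<Sum>y2\<in>tidx D K2. Gk D R uu (L-1) 2 (join K1 y1 x) y2 * B (join K2 y2 (join K1 y1 x)))"
      using kern[OF Z KR z _ s2[unfolded K2_def]] unfolding K2_def by simp
    also have "\<dots> = (\<Sum>y2\<in>tidx D K2. Gk D R uu (L-1) 2 x y2 * (\<Sum>r<k1. u r y1 * (\<sigma> r * v r y2)))"
      using loc Bw[OF y1] by simp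
    finally show "Gk D R uu (L-1) 1 x y1 * Mpf D uu kk (L-1) 2 B (join K1 y1 x) = (\<Sum>y2\<in>tidx D K2. \<Sum>r<k1.
       Gk D R uu (L-1) 1 x y1 * Gk D R uu (L-1) 2 x y2 * (u r y1 * (\<sigma> r * v r y2)))"
      by (simp add: sum_distrib_left mult_ac)
  qed
  also have "\<dots> = (\<Sum>y1\<in>tidx D K1. \<Sum>r<k1. \<Sum>y2\<in>tidx D K2.
       Gk D R uu (L-1) 1 x y1 * Gk D R uu (L-1) 2 x y2 * (u r y1 * (\<sigma> r * v r y2)))"
    by (intro sum.cong refl) (rule sum.swap)
  also have "\<dots> = (\<Sum>r<k1. \<Sum>y1\<in>tidx D K1. \<Sum>y2\<in>tidx D K2.
       Gk D R uu (L-1) 1 x y1 * Gk D R uu (L-1) 2 x y2 * (u r y1 * (\<sigma> r * v r y2)))"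
    by (rule sum.swap)
  also have "\<dots> = (\<Sum>r<k1. \<sigma> r * ph1 r * ph2 r)"
  proof (intro sum.cong refl)
    fix r assume r: "r \<in> {..<k1}"
    have p1: "ph1 r = (\<Sum>y1\<in>tidx D K1. Gk D R uu (L-1) 1 x y1 * u r y1)"
      unfolding ph1_def using phi_G[OF xU _ s1[unfolded K1_def], of R uu r] u1 r unfolding K1_def by simp
    have p2: "ph2 r = (\<Sum>y2\<in>tidx D K2. Gk D R uu (L-1) 2 x y2 * v r y2)"
      unfolding ph2_def using phi_G[OF xU _ s2[unfolded K2_def], of R uu r] u2 r unfolding K2_def by simp
    show "(\<Sum>y1\<in>tidx D K1. \<Sum>y2\<in>tidx D K2. Gk D R uu (L-1) 1 x y1 * Gk D R uu (L-1) 2 x y2 * (u r y1 * (\<sigma> r * v r y2)))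
        = \<sigma> r * ph1 r * ph2 r"
    proof -
      have "\<sigma> r * ph1 r * ph2 r = (\<Sum>y1\<in>tidx D K1. \<Sum>y2\<in>tidx D K2. \<sigma> r * ((Gk D R uu (L-1) 1 x y1 * u r y1) * (Gk D R uu (L-1) 2 x y2 * v r y2)))"
      proof -
        have "ph1 r * ph2 r = (\<Sum>y1\<in>tidx D K1. \<Sum>y2\<in>tidx D K2. (Gk D R uu (L-1) 1 x y1 * u r y1) * (Gk D R uu (L-1) 2 x y2 * v r y2))"
          unfolding p1 p2 by (rule sum_product)
        hence "\<sigma> r * ph1 r * ph2 r = \<sigma> r * (\<Sum>y1\<in>tidx D K1. \<Sum>y2\<in>tidx D K2. (Gk D R uu (L-1) 1 x y1 * u r y1) * (Gk D R uu (L-1) 2 x y2 * v r y2))"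
          by (simp only: mult.assoc)
        thus ?thesis by (simp only: sum_distrib_left)
      qed
      also have "\<dots> = (\<Sum>y1\<in>tidx D K1. \<Sum>y2\<in>tidx D K2. Gk D R uu (L-1) 1 x y1 * Gk D R uu (L-1) 2 x y2 * (u r y1 * (\<sigma> r * v r y2)))"
        by (intro sum.cong refl) (simp add: mult_ac)
      finally show ?thesis by simp
    qed
  qed
  finally show ?thesis using lhs unfolding B_def K1_def by simp
qed



lemma orthn_cong: "orthn S w k \<Longrightarrow> (\<And>r y. r < k \<Longrightarrow> w' r y = w r y) \<Longrightarrow> orthn S w' k"
  unfolding orthn_def ip_def by simp

lemma Pj_cong: "(\<And>r y. r < k \<Longrightarrow> w' r y = w r y) \<Longrightarrow> Pj D K k w' = Pj D K k w"
  unfolding Pj_def by (intro ext sum.cong refl) simp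

lemma Pj_zero: "Pj D K 0 w T = (\<lambda>x. 0)"
  unfolding Pj_def by simp

lemma ivl_min: "{min R m..<m} = {R..<(m::nat)}"
  by auto

theorem theorem2:
  fixes L R :: nat and D :: "nat \<Rightarrow> nat" and A :: "(nat \<Rightarrow> nat) \<Rightarrow> real" and \<epsilon> :: real
  assumes "L \<ge> 1"
    and "\<forall>n\<in>{1..2^L}. D n > 0"
    and "R > 0"
    and "\<epsilon> > 0"
    and "\<forall>K\<in>canonical_parts L.
           QE D (2^L) A K \<le> \<epsilon>^2 / ((2 * 2^L - 3) * (tnorm D (2^L) A)^2) * ln (real R)"
  shows "\<exists>v a c. tnorm D (2^L) (\<lambda>idx. tn_W R v a c L idx - A idx) \<le> \<epsilon>"
proof -
  note L = assms(1) and Rpos = assms(3) and eps = assms(4) and hyp = assms(5)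
  define U where "U = {1..(2::nat)^L}"
  have finU: "finite U" unfolding U_def by simp
  define mK where "mK = (\<lambda>K. min (card (tidx D K)) (card (tidx D (U - K))))"
  define sv where "sv = (\<lambda>K. sing_vals (tidx D K) (tidx D (U - K)) (matricize A K))"
  define uvK where "uvK = (\<lambda>K. SOME p. is_svd (tidx D K) (tidx D (U - K)) (matricize A K) (sv K) (fst p) (snd p))"
  define uK where "uK = (\<lambda>K. fst (uvK K))"
  define vK where "vK = (\<lambda>K. snd (uvK K))"
  have svdK: "is_svd (tidx D K) (tidx D (U - K)) (matricize A K) (sv K) (uK K) (vK K)" if KU: "K \<subseteq> U" for K
  proof -
    have f1: "finite (tidx D K)" using finite_tidx finite_subset[OF KU finU] by blast
    have f2: "finite (tidx D (U - K))" using finite_tidx finU by blast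
    have "\<exists>\<sigma> u v. is_svd (tidx D K) (tidx D (U - K)) (matricize A K) \<sigma> u v" by (rule svd_exists[OF f1 f2])
    hence "\<exists>u v. is_svd (tidx D K) (tidx D (U - K)) (matricize A K) (sv K) u v"
      unfolding sv_def sing_vals_def by (rule someI_ex)
    hence "\<exists>p. is_svd (tidx D K) (tidx D (U - K)) (matricize A K) (sv K) (fst p) (snd p)" by auto
    thus ?thesis unfolding uK_def vK_def uvK_def by (rule someI_ex)
  qed
  define K1 where "K1 = blk (L-1) 1"
  define k1 where "k1 = min R (mK K1)"
  define kk where "kk = (\<lambda>l n. if l = L-1 \<and> n = 2 then k1 else min R (mK (blk l n)))"
  define uu where "uu = (\<lambda>l n r y. if r < kk l n then (if l = L-1 \<and> n = 2 then vK K1 r y else uK (blk l n) r y) else 0)"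
  define cc where "cc = (\<lambda>i j. if i = j \<and> i < k1 then sv K1 i else 0)"
  define c where "c = (2 * 2^L - 3 :: real)"
  have c4: "(2::real) * 2^L \<ge> 4"
  proof -
    have "(2::real)^L \<ge> 2^1" using L by (intro power_increasing) auto
    thus ?thesis by simp
  qed
  hence cpos: "c > 0" unfolding c_def by simp
  define \<tau> where "\<tau> = \<epsilon>^2 / c"
  have tau0: "\<tau> \<ge> 0" unfolding \<tau>_def using cpos by simp
  have Z: "\<forall>l m r y. kk l m \<le> r \<longrightarrow> uu l m r y = 0" unfolding uu_def by simp
  have KR: "\<forall>l m. kk l m \<le> R" unfolding kk_def k1_def by simp
  have nrmA: "nrm D U A = (\<Sum>d<mK K. (sv K d)^2)" if KU: "K \<subseteq> U" for K
  proof -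
    have "nrm D U (\<lambda>x. A x - Pj D K 0 (uK K) A x) = (\<Sum>d\<in>{0..<mK K}. (sv K d)^2)"
      unfolding mK_def by (rule tail_nrm[OF KU svdK[OF KU]]) simp
    thus ?thesis by (simp add: Pj_zero atLeast0LessThan)
  qed
  have tn2: "(tnorm D (2^L) A)^2 = nrm D U A"
    unfolding tnorm_def nrm_def U_def by (simp add: sum_nonneg)
  have good: "Eok D U A (Pj D (blk l n) (kk l n) (uu l n)) \<tau>"
    if l: "l \<le> L" and n1: "1 \<le> n" and n2: "n \<le> 2^(L - l)" and ng: "\<not> (l = L-1 \<and> n = 2)" for l n
  proof -
    define K where "K = blk l n"
    have KU: "K \<subseteq> U" unfolding K_def U_def by (rule blk_sub[OF n1 n2 l])
    have kk: "kk l n = min R (mK K)" unfolding kk_def K_def using ng by auto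
    have uuK: "uu l n r y = uK K r y" if "r < kk l n" for r y unfolding uu_def K_def using ng that by auto
    note svd = svdK[OF KU]
    have ou: "orthn (tidx D K) (uK K) (mK K)" using svd_facts(1)[OF svd] unfolding mK_def .
    have ok: "orthn (tidx D K) (uu l n) (kk l n)"
      by (rule orthn_cong[OF orthn_mono[OF ou]]) (auto simp: kk uuK)
    have E: "Eok D U A (Pj D K (kk l n) (uu l n)) (nrm D U (\<lambda>x. A x - Pj D K (kk l n) (uu l n) A x))"
      by (rule Eok_Pj[OF KU ok])
    have PjE: "Pj D K (kk l n) (uu l n) = Pj D K (kk l n) (uK K)" by (rule Pj_cong) (rule uuK)
    have tl: "nrm D U (\<lambda>x. A x - Pj D K (kk l n) (uu l n) A x) = (\<Sum>d\<in>{R..<mK K}. (sv K d)^2)"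
    proof -
      have "kk l n \<le> min (card (tidx D K)) (card (tidx D (U - K)))" unfolding kk mK_def by (simp add: min_def)
      from tail_nrm[OF KU svd this]
      have "nrm D U (\<lambda>x. A x - Pj D K (kk l n) (uK K) A x) = (\<Sum>d\<in>{min R (mK K)..<mK K}. (sv K d)^2)"
        unfolding kk mK_def .
      thus ?thesis unfolding PjE ivl_min .
    qed
    have canon: "K \<in> canonical_parts L" unfolding K_def by (rule blk_canon[OF n1 n2 l])
    have Q: "QE D (2^L) A K \<le> \<epsilon>^2 / (c * (\<Sum>d<mK K. (sv K d)^2)) * ln (real R)"
      using hyp canon unfolding c_def tn2 nrmA[OF KU] by simp
    have QE': "QE D (2^L) A K = (let S = (\<Sum>d<mK K. (sv K d)^2) in if S = 0 then 0 else - (\<Sum>d<mK K. ((sv K d)^2 / S) * ln ((sv K d)^2 / S)))"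
      unfolding QE_def mK_def sv_def U_def Let_def ..
    have "(\<Sum>d\<in>{R..<mK K}. (sv K d)^2) \<le> \<epsilon>^2 / c"
    proof -
      have nn: "\<forall>d<mK K. 0 \<le> sv K d" using svd_facts(3)[OF svd] unfolding mK_def .
      have so: "\<forall>d. Suc d < mK K \<longrightarrow> sv K (Suc d) \<le> sv K d" using svd_facts(4)[OF svd] unfolding mK_def .
      have H: "(let S = (\<Sum>d<mK K. (sv K d)^2) in if S = 0 then 0 else - (\<Sum>d<mK K. ((sv K d)^2 / S) * ln ((sv K d)^2 / S)))
          \<le> \<epsilon>^2 / (c * (\<Sum>d<mK K. (sv K d)^2)) * ln (real R)" using Q QE' by simp
      show ?thesis
        by (rule tail_bound[OF nn so refl, of R c "\<epsilon>^2"]) (use Rpos cpos H in \<open>auto simp: Let_def\<close>)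
    qed
    hence "nrm D U (\<lambda>x. A x - Pj D K (kk l n) (uu l n) A x) \<le> \<tau>" unfolding tl \<tau>_def .
    thus ?thesis using Eok_cong[OF E] unfolding K_def by blast
  qed
  have PjOK: "\<forall>l' m. l' < L-1 \<longrightarrow> 1 \<le> m \<longrightarrow> m \<le> 2^(L - l') \<longrightarrow> Eok D U A (Pj D (blk l' m) (kk l' m) (uu l' m)) \<tau>"
    using good by auto
  have h2: "(2::nat)^(L - (L-1)) = 2" using L by simp
  have E1: "Eok D U A (Mpf D uu kk (L-1) 1) ((2 * 2^(L-1) - 2) * \<tau>)"
    by (rule Eok_Mpf[OF tau0 PjOK]) (use L h2 in auto)
  have E2: "Eok D U A (Mpf D uu kk (L-1) 2) ((2 * 2^(L-1) - 2) * \<tau>)"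
    by (rule Eok_Mpf[OF tau0 PjOK]) (use L h2 in auto)
  have kk1: "kk (L-1) 1 = k1" unfolding kk_def k1_def K1_def by simp
  have EP: "Eok D U A (Pj D K1 k1 (uu (L-1) 1)) \<tau>"
    using good[of "L-1" 1] h2 kk1 unfolding K1_def by simp
  define W' where "W' = Mpf D uu kk (L-1) 1 (Mpf D uu kk (L-1) 2 (Pj D K1 k1 (uu (L-1) 1) A))"
  have "Eok D U A (\<lambda>B. Mpf D uu kk (L-1) 1 (Mpf D uu kk (L-1) 2 (Pj D K1 k1 (uu (L-1) 1) B)))
      ((2 * 2^(L-1) - 2) * \<tau> + ((2 * 2^(L-1) - 2) * \<tau> + \<tau>))"
    using Eok_comp[OF E1 Eok_comp[OF E2 EP]] by simp
  hence "nrm D U (\<lambda>x. A x - W' x) \<le> ((2 * 2^(L-1) - 2) * \<tau> + ((2 * 2^(L-1) - 2) * \<tau> + \<tau>)) + nrm D U (\<lambda>x. A x - A x)"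
    unfolding Eok_def W'_def by blast
  moreover have "nrm D U (\<lambda>x. A x - A x) = 0" unfolding nrm_def by simp
  moreover have "(2 * 2^(L-1) - 2) * \<tau> + ((2 * 2^(L-1) - 2) * \<tau> + \<tau>) = \<epsilon>^2"
  proof -
    have "(2::real) * 2^(L-1) = 2^L" using L by (metis Suc_diff_1 le_numeral_extra(2) less_le_trans power_Suc zero_less_one)
    hence "(2 * 2^(L-1) - 2) * \<tau> + ((2 * 2^(L-1) - 2) * \<tau> + \<tau>) = c * \<tau>" unfolding c_def by (simp add: algebra_simps)
    thus ?thesis unfolding \<tau>_def using cpos by simp
  qed
  ultimately have errb: "nrm D U (\<lambda>x. A x - W' x) \<le> \<epsilon>^2" by simp
  have K1U: "K1 \<subseteq> U" unfolding K1_def U_def by (rule blk_sub) (use L h2 in auto)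
  have svd1: "is_svd (tidx D (blk (L-1) 1)) (tidx D ({1..2^L} - blk (L-1) 1)) (matricize A (blk (L-1) 1)) (sv K1) (uK K1) (vK K1)"
    using svdK[OF K1U] unfolding U_def K1_def .
  have k1m: "k1 \<le> min (card (tidx D (blk (L-1) 1))) (card (tidx D ({1..2^L} - blk (L-1) 1)))"
    unfolding k1_def mK_def K1_def U_def by (simp add: min_def)
  have k1R: "k1 \<le> R" unfolding k1_def by simp
  have u1: "\<forall>r y. uu (L-1) 1 r y = (if r < k1 then uK K1 r y else 0)"
    unfolding uu_def using kk1 by (simp add: K1_def)
  have u2: "\<forall>r y. uu (L-1) 2 r y = (if r < k1 then vK K1 r y else 0)"
    unfolding uu_def kk_def by simp
  have root: "tn_W R (vvf uu) (aaf D uu) cc L x = W' x" if x: "x \<in> tidx D U" for x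
  proof -
    have x': "x \<in> tidx D {1..2^L}" using x unfolding U_def .
    show ?thesis using root_eq[OF L x' Z KR svd1 k1m k1R u1 u2] unfolding cc_def W'_def K1_def .
  qed
  have "tnorm D (2^L) (\<lambda>idx. tn_W R (vvf uu) (aaf D uu) cc L idx - A idx) = sqrt (nrm D U (\<lambda>x. A x - W' x))"
    unfolding tnorm_def nrm_def U_def[symmetric]
    by (intro arg_cong[where f=sqrt] sum.cong refl) (simp add: root power2_commute)
  also have "\<dots> \<le> sqrt (\<epsilon>^2)" using real_sqrt_le_mono[OF errb] .
  also have "\<dots> = \<epsilon>" using eps by simp
  finally show ?thesis by blast
qed


end
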